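(* For each integer $g\geq 2$ there exists a large set of H-designs LH$(10,g,4,3)$.
   Context: An H-design H$(n,g,k,t)$ is a triple $(Q,G,B)$ where $Q$ is a set of $ng$ points, $G$ is a partition of $Q$ into $n$ groups of size $g$, and $B$ is a set of $k$-subsets of $Q$ (blocks) such that each block meets each group in at most one point and any $t$ points from $t$ distinct groups lie in exactly one block. A large set of H-designs LH$(n,g,k,t)$ is a partition of the set of all $k$-subsets of $Q$ meeting each group of $G$ in at most one point into pairwise disjoint block sets, each of which forms (with $Q$ and $G$) an H-design H$(n,g,k,t)$. *)

theory Defs
  imports "HOL-Library.Disjoint_Sets"
begin

definition transverse :: "'a set set \<Rightarrow> 'a set \<Rightarrow> bool" where
  "transverse G S \<longleftrightarrow> (\<forall>X\<in>G. card (S \<inter> X) \<le> 1)"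

definition group_partition :: "nat \<Rightarrow> nat \<Rightarrow> 'a set \<Rightarrow> 'a set set \<Rightarrow> bool" where
  "group_partition n g Q G \<longleftrightarrow>
     finite Q \<and> partition_on Q G \<and> card G = n \<and> (\<forall>X\<in>G. card X = g)"

definition transverse_ksets :: "nat \<Rightarrow> 'a set \<Rightarrow> 'a set set \<Rightarrow> 'a set set" where
  "transverse_ksets k Q G = {S. S \<subseteq> Q \<and> card S = k \<and> transverse G S}"

definition H_design :: "nat \<Rightarrow> nat \<Rightarrow> nat \<Rightarrow> nat \<Rightarrow> 'a set \<Rightarrow> 'a set set \<Rightarrow> 'a set set \<Rightarrow> bool" where
  "H_design n g k t Q G B \<longleftrightarrow>
     group_partition n g Q G \<and>
     B \<subseteq> transverse_ksets k Q G \<and>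
     (\<forall>T \<in> transverse_ksets t Q G. card {b\<in>B. T \<subseteq> b} = 1)"

definition large_set_H :: "nat \<Rightarrow> nat \<Rightarrow> nat \<Rightarrow> nat \<Rightarrow> 'a set \<Rightarrow> 'a set set \<Rightarrow> 'a set set set \<Rightarrow> bool" where
  "large_set_H n g k t Q G \<B> \<longleftrightarrow>
     group_partition n g Q G \<and>
     partition_on (transverse_ksets k Q G) \<B> \<and>
     (\<forall>B\<in>\<B>. H_design n g k t Q G B)"

end

theory Submission
  imports Defs
begin


lemma div_eq_iff_interval:
  fixes p a g :: nat assumes "g > 0"
  shows "p div g = a \<longleftrightarrow> p \<in> {a*g..<a*g+g}"
proof
  assume h: "p div g = a"
  have "a*g \<le> p" using h div_times_less_eq_dividend[of p g] by simp
  moreover have "p < a*g + g"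
  proof -
    have e: "p = a*g + p mod g" using h div_mult_mod_eq[of p g] by simp
    have "p mod g < g" using mod_less_divisor[OF assms] by blast
    thus ?thesis using e by linarith
  qed
  ultimately show "p \<in> {a*g..<a*g+g}" by simp
next
  assume "p \<in> {a*g..<a*g+g}"
  hence h1: "a*g \<le> p" and h2: "p < (a+1)*g" by auto
  have "(a*g) div g \<le> p div g" using h1 by (rule div_le_mono)
  hence "a \<le> p div g" using assms by simp
  moreover have "p div g < a+1" using h2 assms by (simp add: div_less_iff_less_mult)
  ultimately show "p div g = a" by simp
qed

lemma transverse_iff_inj:
  fixes g :: nat
  assumes g: "g > 0" and S: "S \<subseteq> {..<10*g}"
  shows "transverse ((\<lambda>a. {a*g..<a*g+g}) ` {..<10}) S \<longleftrightarrow> inj_on (\<lambda>p. p div g) S"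
proof
  assume tr: "transverse ((\<lambda>a. {a*g..<a*g+g}) ` {..<10}) S"
  show "inj_on (\<lambda>p. p div g) S"
  proof (rule inj_onI)
    fix p q assume p: "p \<in> S" and q: "q \<in> S" and eq: "p div g = q div g"
    define a where "a = p div g"
    have "p < 10*g" using p S by auto
    hence a10: "a < 10" using g unfolding a_def by (simp add: div_less_iff_less_mult mult.commute)
    have c1: "card (S \<inter> {a*g..<a*g+g}) \<le> 1" using tr a10 unfolding transverse_def by auto
    have "p div g = a" "q div g = a" using eq a_def by auto
    hence "p \<in> {a*g..<a*g+g}" "q \<in> {a*g..<a*g+g}" using div_eq_iff_interval[OF g] by blast+
    hence "p \<in> S \<inter> {a*g..<a*g+g}" "q \<in> S \<inter> {a*g..<a*g+g}" using p q by auto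
    with c1 show "p = q" by (auto simp: card_le_Suc0_iff_eq)
  qed
next
  assume inj: "inj_on (\<lambda>p. p div g) S"
  show "transverse ((\<lambda>a. {a*g..<a*g+g}) ` {..<10}) S"
    unfolding transverse_def
  proof
    fix X assume "X \<in> (\<lambda>a. {a*g..<a*g+g}) ` {..<10}"
    then obtain a where X: "X = {a*g..<a*g+g}" by auto
    have "\<forall>p\<in>S \<inter> X. \<forall>q\<in>S \<inter> X. p = q"
    proof (intro ballI)
      fix p q assume "p \<in> S \<inter> X" "q \<in> S \<inter> X"
      hence "p div g = a" "q div g = a" "p \<in> S" "q \<in> S" using X div_eq_iff_interval[OF g] by auto
      thus "p = q" using inj by (auto dest: inj_onD)
    qed
    moreover have "finite (S \<inter> X)" using S by (meson finite_Int finite_lessThan finite_subset)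
    ultimately show "card (S \<inter> X) \<le> 1" by (simp add: card_le_Suc0_iff_eq)
  qed
qed

lemma grp_partition:
  fixes g :: nat assumes g: "g > 0"
  shows "group_partition 10 g {..<10*g} ((\<lambda>a. {a*g..<a*g+g}) ` {..<10})"
  unfolding group_partition_def
proof (intro conjI)
  show "finite {..<10*g}" by simp
  have inj: "inj_on (\<lambda>a. {a*g..<a*g+g}) {..<10}"
  proof (rule inj_onI)
    fix a b assume "{a*g..<a*g+g} = {b*g..<b*g+g}"
    hence "a*g \<in> {b*g..<b*g+g}" "b*g \<in> {a*g..<a*g+g}" using g by (metis atLeastLessThan_iff le_refl less_add_same_cancel1)+
    hence "(a*g) div g = b" "(b*g) div g = a" using div_eq_iff_interval[OF g] by blast+
    thus "a = b" using g by simp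
  qed
  thus "card ((\<lambda>a. {a*g..<a*g+g}) ` {..<10}) = 10" by (simp add: card_image)
  show "\<forall>X\<in>(\<lambda>a. {a*g..<a*g+g}) ` {..<10}. card X = g" by auto
  show "partition_on {..<10*g} ((\<lambda>a. {a*g..<a*g+g}) ` {..<10})"
  proof (rule partition_onI)
    show "\<Union> ((\<lambda>a. {a*g..<a*g+g}) ` {..<10}) = {..<10*g}"
    proof (intro equalityI subsetI)
      fix p assume "p \<in> \<Union> ((\<lambda>a. {a*g..<a*g+g}) ` {..<10})"
      then obtain a where "a < 10" "p < a*g+g" by auto
      hence "p < (a+1)*g" by simp
      also have "(a+1)*g \<le> 10*g" using \<open>a<10\<close> by (intro mult_right_mono) auto
      finally show "p \<in> {..<10*g}" by simp
    next
      fix p assume "p \<in> {..<10*g}"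
      hence "p div g < 10" using g by (simp add: div_less_iff_less_mult mult.commute)
      moreover have "p \<in> {(p div g)*g..<(p div g)*g+g}" using div_eq_iff_interval[OF g] by blast
      ultimately show "p \<in> \<Union> ((\<lambda>a. {a*g..<a*g+g}) ` {..<10})" by blast
    qed
  next
    fix X Y assume "X \<in> (\<lambda>a. {a*g..<a*g+g}) ` {..<10}" "Y \<in> (\<lambda>a. {a*g..<a*g+g}) ` {..<10}" "X \<noteq> Y"
    then obtain a b where X: "X = {a*g..<a*g+g}" and Y: "Y = {b*g..<b*g+g}" and "a \<noteq> b" by auto
    show "disjnt X Y" unfolding disjnt_def
    proof (rule ccontr)
      assume "X \<inter> Y \<noteq> {}"
      then obtain p where "p \<in> X" "p \<in> Y" by auto
      hence "p div g = a" "p div g = b" using X Y div_eq_iff_interval[OF g] by auto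
      thus False using \<open>a \<noteq> b\<close> by simp
    qed
  next
    show "{} \<notin> (\<lambda>a. {a*g..<a*g+g}) ` {..<10}" using g by auto
  qed
qed

lemma arith1:
  fixes t y r g :: nat assumes "g > 0" "y < g" "(t + y) mod g = r"
  shows "y = (r + (g - t mod g)) mod g"
proof -
  have e: "t + y + (g - t mod g) = y + g * (Suc (t div g))"
  proof -
    have "t = g * (t div g) + t mod g" by simp
    moreover have "t mod g < g" using assms(1) by simp
    ultimately show ?thesis unfolding mult_Suc_right by arith
  qed
  have "(r + (g - t mod g)) mod g = (t + y + (g - t mod g)) mod g"
    using assms(3) by (metis mod_add_left_eq)
  also have "\<dots> = (y + g * Suc (t div g)) mod g" using e by presburger
  also have "\<dots> = y" unfolding mod_mult_self2 using assms by simp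
  finally show ?thesis by simp
qed
lemma arith2:
  fixes t r g :: nat assumes "g > 0" "r < g"
  shows "(t + (r + (g - t mod g)) mod g) mod g = r"
proof -
  have e: "t + (r + (g - t mod g)) = r + g * (Suc (t div g))"
  proof -
    have "t = g * (t div g) + t mod g" by simp
    moreover have "t mod g < g" using assms(1) by simp
    ultimately show ?thesis unfolding mult_Suc_right by arith
  qed
  have "(t + (r + (g - t mod g)) mod g) mod g = (t + (r + (g - t mod g))) mod g"
    by (metis mod_add_right_eq)
  also have "\<dots> = (r + g * Suc (t div g)) mod g" using e by presburger
  also have "\<dots> = r" unfolding mod_mult_self2 using assms by simp
  finally show ?thesis .
qed

lemma rank_lemma:
  fixes J :: "nat set" assumes fin: "finite J" and cJ: "card J = g"
  shows "\<forall>r<g. \<exists>!i. i \<in> J \<and> card {i'\<in>J. i' < i} = r"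
    and "\<forall>i\<in>J. card {i'\<in>J. i' < i} < g"
proof -
  define rk where "rk = (\<lambda>i. card {i'\<in>J. i' < i})"
  have lt: "rk i < g" if "i \<in> J" for i
  proof -
    have "{i'\<in>J. i' < i} \<subset> J" using that by auto
    thus ?thesis unfolding rk_def using cJ fin by (metis psubset_card_mono)
  qed
  have mono: "rk i < rk j" if "i \<in> J" "j \<in> J" "i < j" for i j
  proof -
    have "{i'\<in>J. i' < i} \<subset> {i'\<in>J. i' < j}" using that by auto
    thus ?thesis unfolding rk_def using fin by (metis (no_types, lifting) finite_subset mem_Collect_eq psubset_card_mono subsetI)
  qed
  have inj: "inj_on rk J"
  proof (rule inj_onI)
    fix i j assume "i \<in> J" "j \<in> J" "rk i = rk j"
    thus "i = j" using mono by (metis less_irrefl nat_neq_iff)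
  qed
  have sub: "rk ` J \<subseteq> {..<g}" using lt by auto
  have "card (rk ` J) = g" using inj cJ by (simp add: card_image)
  hence img: "rk ` J = {..<g}" using sub by (metis card_lessThan card_subset_eq finite_lessThan)
  show "\<forall>r<g. \<exists>!i. i \<in> J \<and> card {i'\<in>J. i' < i} = r"
  proof (intro allI impI)
    fix r assume "r < g"
    then obtain i where "i \<in> J" "rk i = r" using img by (metis imageE lessThan_iff)
    moreover have "\<And>j. j \<in> J \<Longrightarrow> rk j = r \<Longrightarrow> j = i" using inj calculation by (metis inj_onD)
    ultimately show "\<exists>!i. i \<in> J \<and> card {i'\<in>J. i' < i} = r" unfolding rk_def by blast
  qed
  show "\<forall>i\<in>J. card {i'\<in>J. i' < i} < g" using lt unfolding rk_def by blast
qed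



lemma main_construction:
  fixes g N :: nat and J :: "nat set \<Rightarrow> nat set"
  assumes g: "g > 0"
    and B1: "\<And>Q. Q \<subseteq> {..<10} \<Longrightarrow> card Q = 4 \<Longrightarrow> J Q \<subseteq> {..<N} \<and> card (J Q) = g"
    and B2: "\<And>i t. i < N \<Longrightarrow> t \<subseteq> {..<10} \<Longrightarrow> card t = 3 \<Longrightarrow> \<exists>!d. d < 10 \<and> d \<notin> t \<and> i \<in> J (insert d t)"
  shows "\<exists>(Q :: nat set) G \<B>. large_set_H 10 g 4 3 Q G \<B>"
proof -
  define Q0 where "Q0 = {..<10*g}"
  define G where "G = (\<lambda>a. {a*g..<a*g+g}) ` {..<10::nat}"
  define grp where "grp = (\<lambda>p::nat. p div g)"
  define rk where "rk = (\<lambda>i Q. card {i'\<in>J Q. i' < i})"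
  define Blk where "Blk = (\<lambda>i. {T \<in> transverse_ksets 4 Q0 G. i \<in> J (grp ` T) \<and> (\<Sum>p\<in>T. p mod g) mod g = rk i (grp ` T)})"
  have GP: "group_partition 10 g Q0 G" using grp_partition[OF g] Q0_def G_def by simp
  have tk: "T \<in> transverse_ksets k Q0 G \<longleftrightarrow> T \<subseteq> Q0 \<and> card T = k \<and> inj_on grp T" for k T
    unfolding transverse_ksets_def using transverse_iff_inj[OF g] Q0_def G_def grp_def by auto
  have grp_lt: "grp p < 10" if "p \<in> Q0" for p
    using that g unfolding Q0_def grp_def by (simp add: div_less_iff_less_mult mult.commute)
  have grpT: "grp ` T \<subseteq> {..<10} \<and> card (grp ` T) = k" if "T \<in> transverse_ksets k Q0 G" for k T
    using that grp_lt unfolding tk by (auto simp: card_image)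
  have finQ0: "finite Q0" unfolding Q0_def by simp
  have rank: "(\<forall>r<g. \<exists>!i. i \<in> J Q \<and> rk i Q = r) \<and> (\<forall>i\<in>J Q. rk i Q < g)"
    if "Q \<subseteq> {..<10}" "card Q = 4" for Q
  proof -
    have "finite (J Q)" "card (J Q) = g" using B1[OF that] finite_subset by auto
    thus ?thesis using rank_lemma unfolding rk_def by blast
  qed
  have HD: "H_design 10 g 4 3 Q0 G (Blk i)" if i: "i < N" for i
    unfolding H_design_def
  proof (intro conjI ballI)
    show "group_partition 10 g Q0 G" by (rule GP)
    show "Blk i \<subseteq> transverse_ksets 4 Q0 G" unfolding Blk_def by auto
    fix T assume T: "T \<in> transverse_ksets 3 Q0 G"
    define A where "A = grp ` T"
    have A: "A \<subseteq> {..<10}" "card A = 3" using grpT[OF T] A_def by auto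
    have TQ0: "T \<subseteq> Q0" and cT: "card T = 3" and injT: "inj_on grp T" using T unfolding tk by auto
    have finT: "finite T" using TQ0 finQ0 finite_subset by auto
    have finA: "finite A" using A_def finT by simp
    obtain d where d: "d < 10" "d \<notin> A" "i \<in> J (insert d A)"
      and duniq: "\<And>d'. d' < 10 \<Longrightarrow> d' \<notin> A \<Longrightarrow> i \<in> J (insert d' A) \<Longrightarrow> d' = d"
      using B2[OF i A] by metis
    define Q where "Q = insert d A"
    have Q: "Q \<subseteq> {..<10}" "card Q = 4" using A d finA unfolding Q_def by auto
    define \<tau> where "\<tau> = (\<Sum>p\<in>T. p mod g)"
    define x where "x = (rk i Q + (g - \<tau> mod g)) mod g"
    define p0 where "p0 = d*g + x"
    have x: "x < g" unfolding x_def using g by simp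
    have p0g: "grp p0 = d" unfolding grp_def p0_def using x g by simp
    have p0m: "p0 mod g = x" unfolding p0_def using x by simp
    have p0T: "p0 \<notin> T" using p0g d(2) A_def by auto
    have rkQ: "rk i Q < g" using rank[OF Q] d(3) Q_def by auto
    have sumc: "(\<tau> + x) mod g = rk i Q" unfolding x_def using arith2[OF g rkQ] by simp
    have p0Q0: "p0 \<in> Q0"
    proof -
      have "p0 < d*g + g" unfolding p0_def using x by simp
      also have "d*g + g = (d+1)*g" by simp
      also have "\<dots> \<le> 10*g" using d(1) by (intro mult_right_mono) auto
      finally show ?thesis unfolding Q0_def by simp
    qed
    have b0: "insert p0 T \<in> Blk i"
    proof -
      have "insert p0 T \<in> transverse_ksets 4 Q0 G" unfolding tk
        using p0Q0 TQ0 cT finT p0T injT p0g d(2) A_def by auto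
      moreover have "grp ` insert p0 T = Q" using p0g A_def Q_def by auto
      moreover have "(\<Sum>p\<in>insert p0 T. p mod g) = \<tau> + x" using finT p0T p0m \<tau>_def by simp
      ultimately show ?thesis unfolding Blk_def using sumc d(3) Q_def by auto
    qed
    have uniq: "b = insert p0 T" if b: "b \<in> Blk i" "T \<subseteq> b" for b
    proof -
      have bt: "b \<in> transverse_ksets 4 Q0 G" and ib: "i \<in> J (grp ` b)"
        and sb: "(\<Sum>p\<in>b. p mod g) mod g = rk i (grp ` b)" using b(1) unfolding Blk_def by auto
      have bQ0: "b \<subseteq> Q0" and cb: "card b = 4" and injb: "inj_on grp b" using bt unfolding tk by auto
      have finb: "finite b" using bQ0 finQ0 finite_subset by auto
      have "card (b - T) = 1" using card_Diff_subset[OF finT b(2)] cb cT by simp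
      then obtain p where bT: "b - T = {p}" by (auto simp: card_1_singleton_iff)
      hence pb: "b = insert p T" and pT: "p \<notin> T" using b(2) by auto
      have gpA: "grp p \<notin> A"
      proof
        assume "grp p \<in> A"
        then obtain q where "q \<in> T" "grp q = grp p" using A_def by auto
        moreover have "q \<in> b" "p \<in> b" using pb \<open>q \<in> T\<close> by auto
        ultimately have "q = p" using inj_onD[OF injb] by blast
        thus False using pT \<open>q \<in> T\<close> by simp
      qed
      have gb: "grp ` b = insert (grp p) A" using pb A_def by auto
      have "grp p < 10" using grp_lt bQ0 pb by auto
      hence gpd: "grp p = d" using duniq gpA ib gb by metis
      have "(\<Sum>p\<in>b. p mod g) = p mod g + \<tau>" using pb finT pT \<tau>_def by simp
      hence "(\<tau> + p mod g) mod g = rk i Q" using sb gb gpd Q_def by (simp add: add.commute)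
      hence "p mod g = x" unfolding x_def using arith1[OF g, of "p mod g" \<tau>] g by simp
      hence "p = p0" unfolding p0_def using gpd grp_def by (metis div_mult_mod_eq)
      thus ?thesis using pb by simp
    qed
    have "{b \<in> Blk i. T \<subseteq> b} = {insert p0 T}" using b0 uniq by auto
    thus "card {b \<in> Blk i. T \<subseteq> b} = 1" by simp
  qed
  have ne: "Blk i \<noteq> {}" if i: "i < N" for i
  proof -
    define T3 where "T3 = {0, g, 2*g}"
    have "T3 \<subseteq> Q0" "card T3 = 3" "inj_on grp T3" unfolding T3_def Q0_def grp_def using g
      by (auto simp: inj_on_def)
    hence "T3 \<in> transverse_ksets 3 Q0 G" using tk by blast
    moreover have "\<forall>T\<in>transverse_ksets 3 Q0 G. card {b \<in> Blk i. T \<subseteq> b} = 1"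
      using HD[OF i] unfolding H_design_def by blast
    ultimately have "card {b \<in> Blk i. T3 \<subseteq> b} = 1" by blast
    thus ?thesis by (cases "Blk i = {}") auto
  qed
  have "large_set_H 10 g 4 3 Q0 G (Blk ` {..<N})"
    unfolding large_set_H_def
  proof (intro conjI ballI)
    show "group_partition 10 g Q0 G" by (rule GP)
    show "partition_on (transverse_ksets 4 Q0 G) (Blk ` {..<N})"
    proof (rule partition_onI)
      show "\<Union> (Blk ` {..<N}) = transverse_ksets 4 Q0 G"
      proof (intro equalityI subsetI)
        fix T assume "T \<in> \<Union> (Blk ` {..<N})"
        thus "T \<in> transverse_ksets 4 Q0 G" unfolding Blk_def by auto
      next
        fix T assume T: "T \<in> transverse_ksets 4 Q0 G"
        define Q where "Q = grp ` T"
        have Q: "Q \<subseteq> {..<10}" "card Q = 4" using grpT[OF T] Q_def by auto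
        define s where "s = (\<Sum>p\<in>T. p mod g) mod g"
        have "s < g" unfolding s_def using g by simp
        then obtain i where "i \<in> J Q" "rk i Q = s" using rank[OF Q] by blast
        moreover have "i < N" using B1[OF Q] calculation by auto
        ultimately show "T \<in> \<Union> (Blk ` {..<N})" unfolding Blk_def using T Q_def s_def by auto
      qed
    next
      fix X Y assume X: "X \<in> Blk ` {..<N}" and Y: "Y \<in> Blk ` {..<N}" and XY: "X \<noteq> Y"
      then obtain i j where Xi: "X = Blk i" and Yj: "Y = Blk j" by auto
      show "disjnt X Y" unfolding disjnt_def
      proof (rule ccontr)
        assume "X \<inter> Y \<noteq> {}"
        then obtain T where TX: "T \<in> Blk i" and TY: "T \<in> Blk j" using Xi Yj by auto
        define Q where "Q = grp ` T"
        have T: "T \<in> transverse_ksets 4 Q0 G" using TX unfolding Blk_def by auto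
        have Q: "Q \<subseteq> {..<10}" "card Q = 4" using grpT[OF T] Q_def by auto
        have "i \<in> J Q" "j \<in> J Q" "rk i Q = rk j Q" using TX TY unfolding Blk_def Q_def by auto
        moreover have "rk i Q < g" using rank[OF Q] calculation by auto
        ultimately have "i = j" using rank[OF Q] by metis
        thus False using XY Xi Yj by simp
      qed
    next
      show "{} \<notin> Blk ` {..<N}" using ne by (metis imageE lessThan_iff)
    qed
    fix B assume "B \<in> Blk ` {..<N}"
    thus "H_design 10 g 4 3 Q0 G B" using HD by auto
  qed
  thus ?thesis by blast
qed



fun lkup :: "(nat list \<times> nat list) list \<Rightarrow> nat list \<Rightarrow> nat list" where
  "lkup [] q = []"
| "lkup ((k,v)#r) q = (if k = q then v else lkup r q)"

fun lkq :: "(nat list \<times> nat list) list list list \<Rightarrow> nat list \<Rightarrow> nat list" where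
  "lkq tb [a,b,c,d] = lkup (tb ! a ! b) [a,b,c,d]"
| "lkq tb _ = []"
declare lkq.simps[simp del]

definition cov_ok :: "nat list \<Rightarrow> nat \<Rightarrow> nat \<Rightarrow> bool" where
  "cov_ok js lam n = (distinct js \<and> length js = lam \<and> (\<forall>j\<in>set js. j < n))"
definition sqs_ok :: "(nat list \<Rightarrow> nat list) \<Rightarrow> nat list \<Rightarrow> nat \<Rightarrow> bool" where
  "sqs_ok f t n = (sort (concat (map (\<lambda>d. f (insort d t)) (filter (\<lambda>d. d \<notin> set t) [0..<10]))) = [0..<n])"
lemma upt10: "[0..<10] = [0,1,2,3,4,5,6,7,8,9::nat]" by code_simp
lemma upt14: "[0..<14] = [0,Suc 0,2,3,4,5,6,7,8,9,10,11,12,13::nat]" by code_simp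
lemma upt21: "[0..<21] = [0,Suc 0,2,3,4,5,6,7,8,9,10,11,12,13,14,15,16,17,18,19,20::nat]" by code_simp

definition quadsL :: "nat list list" where
  "quadsL = concat (map (\<lambda>a. concat (map (\<lambda>b. concat (map (\<lambda>c. map (\<lambda>d. [a,b,c,d]) [c+1..<10]) [b+1..<10])) [a+1..<10])) [0..<10])"
definition triplesL :: "nat list list" where
  "triplesL = concat (map (\<lambda>a. concat (map (\<lambda>b. map (\<lambda>c. [a,b,c]) [b+1..<10]) [a+1..<10])) [0..<10])"
lemma quadsL_eq: "quadsL = [[0,1,2,3],[0,1,2,4],[0,1,2,5],[0,1,2,6],[0,1,2,7],[0,1,2,8],[0,1,2,9],[0,1,3,4],[0,1,3,5],[0,1,3,6],[0,1,3,7],[0,1,3,8],[0,1,3,9],[0,1,4,5],[0,1,4,6],[0,1,4,7],[0,1,4,8],[0,1,4,9],[0,1,5,6],[0,1,5,7],[0,1,5,8],[0,1,5,9],[0,1,6,7],[0,1,6,8],[0,1,6,9],[0,1,7,8],[0,1,7,9],[0,1,8,9],[0,2,3,4],[0,2,3,5],[0,2,3,6],[0,2,3,7],[0,2,3,8],[0,2,3,9],[0,2,4,5],[0,2,4,6],[0,2,4,7],[0,2,4,8],[0,2,4,9],[0,2,5,6],[0,2,5,7],[0,2,5,8],[0,2,5,9],[0,2,6,7],[0,2,6,8],[0,2,6,9],[0,2,7,8],[0,2,7,9],[0,2,8,9],[0,3,4,5],[0,3,4,6],[0,3,4,7],[0,3,4,8],[0,3,4,9],[0,3,5,6],[0,3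,5,7],[0,3,5,8],[0,3,5,9],[0,3,6,7],[0,3,6,8],[0,3,6,9],[0,3,7,8],[0,3,7,9],[0,3,8,9],[0,4,5,6],[0,4,5,7],[0,4,5,8],[0,4,5,9],[0,4,6,7],[0,4,6,8],[0,4,6,9],[0,4,7,8],[0,4,7,9],[0,4,8,9],[0,5,6,7],[0,5,6,8],[0,5,6,9],[0,5,7,8],[0,5,7,9],[0,5,8,9],[0,6,7,8],[0,6,7,9],[0,6,8,9],[0,7,8,9],[1,2,3,4],[1,2,3,5],[1,2,3,6],[1,2,3,7],[1,2,3,8],[1,2,3,9],[1,2,4,5],[1,2,4,6],[1,2,4,7],[1,2,4,8],[1,2,4,9],[1,2,5,6],[1,2,5,7],[1,2,5,8],[1,2,5,9],[1,2,6,7],[1,2,6,8],[1,2,6,9],[1,2,7,8],[1,2,7,9],[1,2,8,9],[1,3,4,5],[1,3,4,6],[1,3,4,7],[1,3,4,8],[1,3,4,9],[1,3,5,6],[1,3,5,7],[1,3,5,8],[1,3,5,9],[1,3,6,7],[1,3,6,8],[1,3,6,9],[1,3,7,8],[1,3,7,9],[1,3,8,9],[1,4,5,6],[1,4,5,7],[1,4,5,8],[1,4,5,9],[1,4,6,7],[1,4,6,8],[1,4,6,9],[1,4,7,8],[1,4,7,9],[1,4,8,9],[1,5,6,7],[1,5,6,8],[1,5,6,9],[1,5,7,8],[1,5,7,9],[1,5,8,9],[1,6,7,8],[1,6,7,9],[1,6,8,9],[1,7,8,9],[2,3,4,5],[2,3,4,6],[2,3,4,7],[2,3,4,8],[2,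3,4,9],[2,3,5,6],[2,3,5,7],[2,3,5,8],[2,3,5,9],[2,3,6,7],[2,3,6,8],[2,3,6,9],[2,3,7,8],[2,3,7,9],[2,3,8,9],[2,4,5,6],[2,4,5,7],[2,4,5,8],[2,4,5,9],[2,4,6,7],[2,4,6,8],[2,4,6,9],[2,4,7,8],[2,4,7,9],[2,4,8,9],[2,5,6,7],[2,5,6,8],[2,5,6,9],[2,5,7,8],[2,5,7,9],[2,5,8,9],[2,6,7,8],[2,6,7,9],[2,6,8,9],[2,7,8,9],[3,4,5,6],[3,4,5,7],[3,4,5,8],[3,4,5,9],[3,4,6,7],[3,4,6,8],[3,4,6,9],[3,4,7,8],[3,4,7,9],[3,4,8,9],[3,5,6,7],[3,5,6,8],[3,5,6,9],[3,5,7,8],[3,5,7,9],[3,5,8,9],[3,6,7,8],[3,6,7,9],[3,6,8,9],[3,7,8,9],[4,5,6,7],[4,5,6,8],[4,5,6,9],[4,5,7,8],[4,5,7,9],[4,5,8,9],[4,6,7,8],[4,6,7,9],[4,6,8,9],[4,7,8,9],[5,6,7,8],[5,6,7,9],[5,6,8,9],[5,7,8,9],[6,7,8,9]]" unfolding quadsL_def by code_simp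
lemma triplesL_eq: "triplesL = [[0,1,2],[0,1,3],[0,1,4],[0,1,5],[0,1,6],[0,1,7],[0,1,8],[0,1,9],[0,2,3],[0,2,4],[0,2,5],[0,2,6],[0,2,7],[0,2,8],[0,2,9],[0,3,4],[0,3,5],[0,3,6],[0,3,7],[0,3,8],[0,3,9],[0,4,5],[0,4,6],[0,4,7],[0,4,8],[0,4,9],[0,5,6],[0,5,7],[0,5,8],[0,5,9],[0,6,7],[0,6,8],[0,6,9],[0,7,8],[0,7,9],[0,8,9],[1,2,3],[1,2,4],[1,2,5],[1,2,6],[1,2,7],[1,2,8],[1,2,9],[1,3,4],[1,3,5],[1,3,6],[1,3,7],[1,3,8],[1,3,9],[1,4,5],[1,4,6],[1,4,7],[1,4,8],[1,4,9],[1,5,6],[1,5,7],[1,5,8],[1,5,9],[1,6,7],[1,6,8],[1,6,9],[1,7,8],[1,7,9],[1,8,9],[2,3,4],[2,3,5],[2,3,6],[2,3,7],[2,3,8],[2,3,9],[2,4,5],[2,4,6],[2,4,7],[2,4,8],[2,4,9],[2,5,6],[2,5,7],[2,5,8],[2,5,9],[2,6,7],[2,6,8],[2,6,9],[2,7,8],[2,7,9],[2,8,9],[3,4,5],[3,4,6],[3,4,7],[3,4,8],[3,4,9],[3,5,6],[3,5,7],[3,5,8],[3,5,9],[3,6,7],[3,6,8],[3,6,9],[3,7,8],[3,7,9],[3,8,9],[4,5,6],[4,5,7],[4,5,8],[4,5,9],[4,6,7],[4,6,8],[4,6,9],[4,7,8],[4,7,9],[4,8,9],[5,6,7],[5,6,8],[5,6,9],[5,7,8],[5,7,9],[5,8,9],[6,7,8],[6,7,9],[6,8,9],[7,8,9]]"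 unfolding triplesL_def by code_simp

definition chk_cov :: "(nat list \<times> nat list) list list list \<Rightarrow> nat \<Rightarrow> nat \<Rightarrow> bool" where
  "chk_cov tb lam n = (\<forall>q\<in>set quadsL. cov_ok (lkq tb q) lam n)"
definition chk_sqs :: "(nat list \<times> nat list) list list list \<Rightarrow> nat \<Rightarrow> bool" where
  "chk_sqs tb n = (\<forall>t\<in>set triplesL. sqs_ok (lkq tb) t n)"

definition A2_0_1 :: "(nat list \<times> nat list) list" where
  "A2_0_1 = [([0,1,2,3],[0,1]), ([0,1,2,4],[2,3]), ([0,1,2,5],[4,5]), ([0,1,2,6],[6,7]), ([0,1,2,7],[8,9]), ([0,1,2,8],[10,11]), ([0,1,2,9],[12,13]), ([0,1,3,4],[4,12]), ([0,1,3,5],[2,6]), ([0,1,3,6],[3,10]), ([0,1,3,7],[7,13]), ([0,1,3,8],[8,9]), ([0,1,3,9],[5,11]), ([0,1,4,5],[8,9]), ([0,1,4,6],[11,13]), ([0,1,4,7],[6,10]), ([0,1,4,8],[5,7]), ([0,1,4,9],[0,1]), ([0,1,5,6],[0,1]), ([0,1,5,7],[11,12]), ([0,1,5,8],[3,13]), ([0,1,5,9],[7,10]), ([0,1,6,7],[2,5]), ([0,1,6,8],[4,12]), ([0,1,6,9],[8,9]), ([0,1,7,8],[0,1]), ([0,1,7,9],[3,4]), ([0,1,8,9],[2,6])]"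

definition A2_0_2 :: "(nat list \<times> nat list) list" where
  "A2_0_2 = [([0,2,3,4],[10,11]), ([0,2,3,5],[3,8]), ([0,2,3,6],[12,13]), ([0,2,3,7],[2,6]), ([0,2,3,8],[5,7]), ([0,2,3,9],[4,9]), ([0,2,4,5],[12,13]), ([0,2,4,6],[0,9]), ([0,2,4,7],[1,5]), ([0,2,4,8],[4,6]), ([0,2,4,9],[7,8]), ([0,2,5,6],[10,11]), ([0,2,5,7],[0,7]), ([0,2,5,8],[1,9]), ([0,2,5,9],[2,6]), ([0,2,6,7],[3,4]), ([0,2,6,8],[2,8]), ([0,2,6,9],[1,5]), ([0,2,7,8],[12,13]), ([0,2,7,9],[10,11]), ([0,2,8,9],[0,3])]"

definition A2_0_3 :: "(nat list \<times> nat list) list" where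
  "A2_0_3 = [([0,3,4,5],[1,7]), ([0,3,4,6],[5,8]), ([0,3,4,7],[0,9]), ([0,3,4,8],[2,13]), ([0,3,4,9],[3,6]), ([0,3,5,6],[4,9]), ([0,3,5,7],[5,10]), ([0,3,5,8],[11,12]), ([0,3,5,9],[0,13]), ([0,3,6,7],[1,11]), ([0,3,6,8],[0,6]), ([0,3,6,9],[2,7]), ([0,3,7,8],[3,4]), ([0,3,7,9],[8,12]), ([0,3,8,9],[1,10])]"

definition A2_0_4 :: "(nat list \<times> nat list) list" where
  "A2_0_4 = [([0,4,5,6],[2,6]), ([0,4,5,7],[3,4]), ([0,4,5,8],[0,10]), ([0,4,5,9],[5,11]), ([0,4,6,7],[7,12]), ([0,4,6,8],[1,3]), ([0,4,6,9],[4,10]), ([0,4,7,8],[8,11]), ([0,4,7,9],[2,13]), ([0,4,8,9],[9,12])]"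

definition A2_0_5 :: "(nat list \<times> nat list) list" where
  "A2_0_5 = [([0,5,6,7],[8,13]), ([0,5,6,8],[5,7]), ([0,5,6,9],[3,12]), ([0,5,7,8],[2,6]), ([0,5,7,9],[1,9]), ([0,5,8,9],[4,8])]"

definition A2_0_6 :: "(nat list \<times> nat list) list" where
  "A2_0_6 = [([0,6,7,8],[9,10]), ([0,6,7,9],[0,6]), ([0,6,8,9],[11,13])]"

definition A2_0_7 :: "(nat list \<times> nat list) list" where
  "A2_0_7 = [([0,7,8,9],[5,7])]"

definition A2_1_2 :: "(nat list \<times> nat list) list" where
  "A2_1_2 = [([1,2,3,4],[6,9]), ([1,2,3,5],[7,13]), ([1,2,3,6],[4,5]), ([1,2,3,7],[3,11]), ([1,2,3,8],[2,12]), ([1,2,3,9],[8,10]), ([1,2,4,5],[1,11]), ([1,2,4,6],[8,10]), ([1,2,4,7],[7,12]), ([1,2,4,8],[0,13]), ([1,2,4,9],[4,5]), ([1,2,5,6],[9,12]), ([1,2,5,7],[2,10]), ([1,2,5,8],[6,8]), ([1,2,5,9],[0,3]), ([1,2,6,7],[0,13]), ([1,2,6,8],[1,3]), ([1,2,6,9],[2,11]), ([1,2,7,8],[4,5]), ([1,2,7,9],[1,6]), ([1,2,8,9],[7,9])]"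

definition A2_1_3 :: "(nat list \<times> nat list) list" where
  "A2_1_3 = [([1,3,4,5],[3,10]), ([1,3,4,6],[0,2]), ([1,3,4,7],[5,8]), ([1,3,4,8],[1,11]), ([1,3,4,9],[7,13]), ([1,3,5,6],[8,11]), ([1,3,5,7],[1,4]), ([1,3,5,8],[0,5]), ([1,3,5,9],[9,12]), ([1,3,6,7],[9,12]), ([1,3,6,8],[7,13]), ([1,3,6,9],[1,6]), ([1,3,7,8],[6,10]), ([1,3,7,9],[0,2]), ([1,3,8,9],[3,4])]"

definition A2_1_4 :: "(nat list \<times> nat list) list" where
  "A2_1_4 = [([1,4,5,6],[5,7]), ([1,4,5,7],[0,13]), ([1,4,5,8],[4,12]), ([1,4,5,9],[2,6]), ([1,4,6,7],[1,4]), ([1,4,6,8],[6,9]), ([1,4,6,9],[3,12]), ([1,4,7,8],[2,3]), ([1,4,7,9],[9,11]), ([1,4,8,9],[8,10])]"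

definition A2_1_5 :: "(nat list \<times> nat list) list" where
  "A2_1_5 = [([1,5,6,7],[3,6]), ([1,5,6,8],[2,10]), ([1,5,6,9],[4,13]), ([1,5,7,8],[7,9]), ([1,5,7,9],[5,8]), ([1,5,8,9],[1,11])]"

definition A2_1_6 :: "(nat list \<times> nat list) list" where
  "A2_1_6 = [([1,6,7,8],[8,11]), ([1,6,7,9],[7,10]), ([1,6,8,9],[0,5])]"

definition A2_1_7 :: "(nat list \<times> nat list) list" where
  "A2_1_7 = [([1,7,8,9],[12,13])]"

definition A2_2_3 :: "(nat list \<times> nat list) list" where
  "A2_2_3 = [([2,3,4,5],[0,5]), ([2,3,4,6],[1,7]), ([2,3,4,7],[4,13]), ([2,3,4,8],[3,8]), ([2,3,4,9],[2,12]), ([2,3,5,6],[2,6]), ([2,3,5,7],[9,12]), ([2,3,5,8],[4,10]), ([2,3,5,9],[1,11]), ([2,3,6,7],[8,10]), ([2,3,6,8],[9,11]), ([2,3,6,9],[0,3]), ([2,3,7,8],[0,1]), ([2,3,7,9],[5,7]), ([2,3,8,9],[6,13])]"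

definition A2_2_4 :: "(nat list \<times> nat list) list" where
  "A2_2_4 = [([2,4,5,6],[3,4]), ([2,4,5,7],[6,8]), ([2,4,5,8],[2,7]), ([2,4,5,9],[9,10]), ([2,4,6,7],[2,11]), ([2,4,6,8],[5,12]), ([2,4,6,9],[6,13]), ([2,4,7,8],[9,10]), ([2,4,7,9],[0,3]), ([2,4,8,9],[1,11])]"

definition A2_2_5 :: "(nat list \<times> nat list) list" where
  "A2_2_5 = [([2,5,6,7],[1,5]), ([2,5,6,8],[0,13]), ([2,5,6,9],[7,8]), ([2,5,7,8],[3,11]), ([2,5,7,9],[4,13]), ([2,5,8,9],[5,12])]"

definition A2_2_6 :: "(nat list \<times> nat list) list" where
  "A2_2_6 = [([2,6,7,8],[6,7]), ([2,6,7,9],[9,12]), ([2,6,8,9],[4,10])]"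

definition A2_2_7 :: "(nat list \<times> nat list) list" where
  "A2_2_7 = [([2,7,8,9],[2,8])]"

definition A2_3_4 :: "(nat list \<times> nat list) list" where
  "A2_3_4 = [([3,4,5,6],[12,13]), ([3,4,5,7],[2,11]), ([3,4,5,8],[6,9]), ([3,4,5,9],[4,8]), ([3,4,6,7],[3,6]), ([3,4,6,8],[4,10]), ([3,4,6,9],[9,11]), ([3,4,7,8],[7,12]), ([3,4,7,9],[1,10]), ([3,4,8,9],[0,5])]"

definition A2_3_5 :: "(nat list \<times> nat list) list" where
  "A2_3_5 = [([3,5,6,7],[0,7]), ([3,5,6,8],[1,3]), ([3,5,6,9],[5,10]), ([3,5,7,8],[8,13]), ([3,5,7,9],[3,6]), ([3,5,8,9],[2,7])]"

definition A2_3_6 :: "(nat list \<times> nat list) list" where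
  "A2_3_6 = [([3,6,7,8],[2,5]), ([3,6,7,9],[4,13]), ([3,6,8,9],[8,12])]"

definition A2_3_7 :: "(nat list \<times> nat list) list" where
  "A2_3_7 = [([3,7,8,9],[9,11])]"

definition A2_4_5 :: "(nat list \<times> nat list) list" where
  "A2_4_5 = [([4,5,6,7],[9,10]), ([4,5,6,8],[8,11]), ([4,5,6,9],[0,1]), ([4,5,7,8],[1,5]), ([4,5,7,9],[7,12]), ([4,5,8,9],[3,13])]"

definition A2_4_6 :: "(nat list \<times> nat list) list" where
  "A2_4_6 = [([4,6,7,8],[0,13]), ([4,6,7,9],[5,8]), ([4,6,8,9],[2,7])]"

definition A2_4_7 :: "(nat list \<times> nat list) list" where
  "A2_4_7 = [([4,7,8,9],[4,6])]"

definition A2_5_6 :: "(nat list \<times> nat list) list" where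
  "A2_5_6 = [([5,6,7,8],[4,12]), ([5,6,7,9],[2,11]), ([5,6,8,9],[6,9])]"

definition A2_5_7 :: "(nat list \<times> nat list) list" where
  "A2_5_7 = [([5,7,8,9],[0,10])]"

definition A2_6_7 :: "(nat list \<times> nat list) list" where
  "A2_6_7 = [([6,7,8,9],[1,3])]"

definition A2 :: "(nat list \<times> nat list) list list list" where
  "A2 = [[[], A2_0_1, A2_0_2, A2_0_3, A2_0_4, A2_0_5, A2_0_6, A2_0_7, [], []],
    [[], [], A2_1_2, A2_1_3, A2_1_4, A2_1_5, A2_1_6, A2_1_7, [], []],
    [[], [], [], A2_2_3, A2_2_4, A2_2_5, A2_2_6, A2_2_7, [], []],
    [[], [], [], [], A2_3_4, A2_3_5, A2_3_6, A2_3_7, [], []],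
    [[], [], [], [], [], A2_4_5, A2_4_6, A2_4_7, [], []],
    [[], [], [], [], [], [], A2_5_6, A2_5_7, [], []],
    [[], [], [], [], [], [], [], A2_6_7, [], []],
    [[], [], [], [], [], [], [], [], [], []],
    [[], [], [], [], [], [], [], [], [], []],
    [[], [], [], [], [], [], [], [], [], []]]"

lemma A2_vals_0_1:
  "lkq A2 [0,1,2,3] = [0,1]"
  "lkq A2 [0,Suc 0,2,3] = [0,1]"
  "lkq A2 [0,1,2,4] = [2,3]"
  "lkq A2 [0,Suc 0,2,4] = [2,3]"
  "lkq A2 [0,1,2,5] = [4,5]"
  "lkq A2 [0,Suc 0,2,5] = [4,5]"
  "lkq A2 [0,1,2,6] = [6,7]"
  "lkq A2 [0,Suc 0,2,6] = [6,7]"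
  "lkq A2 [0,1,2,7] = [8,9]"
  "lkq A2 [0,Suc 0,2,7] = [8,9]"
  "lkq A2 [0,1,2,8] = [10,11]"
  "lkq A2 [0,Suc 0,2,8] = [10,11]"
  "lkq A2 [0,1,2,9] = [12,13]"
  "lkq A2 [0,Suc 0,2,9] = [12,13]"
  "lkq A2 [0,1,3,4] = [4,12]"
  "lkq A2 [0,Suc 0,3,4] = [4,12]"
  "lkq A2 [0,1,3,5] = [2,6]"
  "lkq A2 [0,Suc 0,3,5] = [2,6]"
  "lkq A2 [0,1,3,6] = [3,10]"
  "lkq A2 [0,Suc 0,3,6] = [3,10]"
  "lkq A2 [0,1,3,7] = [7,13]"
  "lkq A2 [0,Suc 0,3,7] = [7,13]"
  "lkq A2 [0,1,3,8] = [8,9]"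
  "lkq A2 [0,Suc 0,3,8] = [8,9]"
  "lkq A2 [0,1,3,9] = [5,11]"
  "lkq A2 [0,Suc 0,3,9] = [5,11]"
  "lkq A2 [0,1,4,5] = [8,9]"
  "lkq A2 [0,Suc 0,4,5] = [8,9]"
  "lkq A2 [0,1,4,6] = [11,13]"
  "lkq A2 [0,Suc 0,4,6] = [11,13]"
  "lkq A2 [0,1,4,7] = [6,10]"
  "lkq A2 [0,Suc 0,4,7] = [6,10]"
  "lkq A2 [0,1,4,8] = [5,7]"
  "lkq A2 [0,Suc 0,4,8] = [5,7]"
  "lkq A2 [0,1,4,9] = [0,1]"
  "lkq A2 [0,Suc 0,4,9] = [0,1]"
  "lkq A2 [0,1,5,6] = [0,1]"
  "lkq A2 [0,Suc 0,5,6] = [0,1]"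
  "lkq A2 [0,1,5,7] = [11,12]"
  "lkq A2 [0,Suc 0,5,7] = [11,12]"
  "lkq A2 [0,1,5,8] = [3,13]"
  "lkq A2 [0,Suc 0,5,8] = [3,13]"
  "lkq A2 [0,1,5,9] = [7,10]"
  "lkq A2 [0,Suc 0,5,9] = [7,10]"
  "lkq A2 [0,1,6,7] = [2,5]"
  "lkq A2 [0,Suc 0,6,7] = [2,5]"
  "lkq A2 [0,1,6,8] = [4,12]"
  "lkq A2 [0,Suc 0,6,8] = [4,12]"
  "lkq A2 [0,1,6,9] = [8,9]"
  "lkq A2 [0,Suc 0,6,9] = [8,9]"
  "lkq A2 [0,1,7,8] = [0,1]"
  "lkq A2 [0,Suc 0,7,8] = [0,1]"
  "lkq A2 [0,1,7,9] = [3,4]"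
  "lkq A2 [0,Suc 0,7,9] = [3,4]"
  "lkq A2 [0,1,8,9] = [2,6]"
  "lkq A2 [0,Suc 0,8,9] = [2,6]"
  by (simp_all add: lkq.simps A2_def A2_0_1_def)

lemma A2_vals_0_2:
  "lkq A2 [0,2,3,4] = [10,11]"
  "lkq A2 [0,2,3,5] = [3,8]"
  "lkq A2 [0,2,3,6] = [12,13]"
  "lkq A2 [0,2,3,7] = [2,6]"
  "lkq A2 [0,2,3,8] = [5,7]"
  "lkq A2 [0,2,3,9] = [4,9]"
  "lkq A2 [0,2,4,5] = [12,13]"
  "lkq A2 [0,2,4,6] = [0,9]"
  "lkq A2 [0,2,4,7] = [1,5]"
  "lkq A2 [0,2,4,8] = [4,6]"
  "lkq A2 [0,2,4,9] = [7,8]"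
  "lkq A2 [0,2,5,6] = [10,11]"
  "lkq A2 [0,2,5,7] = [0,7]"
  "lkq A2 [0,2,5,8] = [1,9]"
  "lkq A2 [0,2,5,9] = [2,6]"
  "lkq A2 [0,2,6,7] = [3,4]"
  "lkq A2 [0,2,6,8] = [2,8]"
  "lkq A2 [0,2,6,9] = [1,5]"
  "lkq A2 [0,2,7,8] = [12,13]"
  "lkq A2 [0,2,7,9] = [10,11]"
  "lkq A2 [0,2,8,9] = [0,3]"
  by (simp_all add: lkq.simps A2_def A2_0_2_def)

lemma A2_vals_0_3:
  "lkq A2 [0,3,4,5] = [1,7]"
  "lkq A2 [0,3,4,6] = [5,8]"
  "lkq A2 [0,3,4,7] = [0,9]"
  "lkq A2 [0,3,4,8] = [2,13]"
  "lkq A2 [0,3,4,9] = [3,6]"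
  "lkq A2 [0,3,5,6] = [4,9]"
  "lkq A2 [0,3,5,7] = [5,10]"
  "lkq A2 [0,3,5,8] = [11,12]"
  "lkq A2 [0,3,5,9] = [0,13]"
  "lkq A2 [0,3,6,7] = [1,11]"
  "lkq A2 [0,3,6,8] = [0,6]"
  "lkq A2 [0,3,6,9] = [2,7]"
  "lkq A2 [0,3,7,8] = [3,4]"
  "lkq A2 [0,3,7,9] = [8,12]"
  "lkq A2 [0,3,8,9] = [1,10]"
  by (simp_all add: lkq.simps A2_def A2_0_3_def)

lemma A2_vals_0_4:
  "lkq A2 [0,4,5,6] = [2,6]"
  "lkq A2 [0,4,5,7] = [3,4]"
  "lkq A2 [0,4,5,8] = [0,10]"
  "lkq A2 [0,4,5,9] = [5,11]"
  "lkq A2 [0,4,6,7] = [7,12]"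
  "lkq A2 [0,4,6,8] = [1,3]"
  "lkq A2 [0,4,6,9] = [4,10]"
  "lkq A2 [0,4,7,8] = [8,11]"
  "lkq A2 [0,4,7,9] = [2,13]"
  "lkq A2 [0,4,8,9] = [9,12]"
  by (simp_all add: lkq.simps A2_def A2_0_4_def)

lemma A2_vals_0_5:
  "lkq A2 [0,5,6,7] = [8,13]"
  "lkq A2 [0,5,6,8] = [5,7]"
  "lkq A2 [0,5,6,9] = [3,12]"
  "lkq A2 [0,5,7,8] = [2,6]"
  "lkq A2 [0,5,7,9] = [1,9]"
  "lkq A2 [0,5,8,9] = [4,8]"
  by (simp_all add: lkq.simps A2_def A2_0_5_def)

lemma A2_vals_0_6:
  "lkq A2 [0,6,7,8] = [9,10]"
  "lkq A2 [0,6,7,9] = [0,6]"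
  "lkq A2 [0,6,8,9] = [11,13]"
  by (simp_all add: lkq.simps A2_def A2_0_6_def)

lemma A2_vals_0_7:
  "lkq A2 [0,7,8,9] = [5,7]"
  by (simp_all add: lkq.simps A2_def A2_0_7_def)

lemma A2_vals_1_2:
  "lkq A2 [1,2,3,4] = [6,9]"
  "lkq A2 [Suc 0,2,3,4] = [6,9]"
  "lkq A2 [1,2,3,5] = [7,13]"
  "lkq A2 [Suc 0,2,3,5] = [7,13]"
  "lkq A2 [1,2,3,6] = [4,5]"
  "lkq A2 [Suc 0,2,3,6] = [4,5]"
  "lkq A2 [1,2,3,7] = [3,11]"
  "lkq A2 [Suc 0,2,3,7] = [3,11]"
  "lkq A2 [1,2,3,8] = [2,12]"
  "lkq A2 [Suc 0,2,3,8] = [2,12]"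
  "lkq A2 [1,2,3,9] = [8,10]"
  "lkq A2 [Suc 0,2,3,9] = [8,10]"
  "lkq A2 [1,2,4,5] = [1,11]"
  "lkq A2 [Suc 0,2,4,5] = [1,11]"
  "lkq A2 [1,2,4,6] = [8,10]"
  "lkq A2 [Suc 0,2,4,6] = [8,10]"
  "lkq A2 [1,2,4,7] = [7,12]"
  "lkq A2 [Suc 0,2,4,7] = [7,12]"
  "lkq A2 [1,2,4,8] = [0,13]"
  "lkq A2 [Suc 0,2,4,8] = [0,13]"
  "lkq A2 [1,2,4,9] = [4,5]"
  "lkq A2 [Suc 0,2,4,9] = [4,5]"
  "lkq A2 [1,2,5,6] = [9,12]"
  "lkq A2 [Suc 0,2,5,6] = [9,12]"
  "lkq A2 [1,2,5,7] = [2,10]"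
  "lkq A2 [Suc 0,2,5,7] = [2,10]"
  "lkq A2 [1,2,5,8] = [6,8]"
  "lkq A2 [Suc 0,2,5,8] = [6,8]"
  "lkq A2 [1,2,5,9] = [0,3]"
  "lkq A2 [Suc 0,2,5,9] = [0,3]"
  "lkq A2 [1,2,6,7] = [0,13]"
  "lkq A2 [Suc 0,2,6,7] = [0,13]"
  "lkq A2 [1,2,6,8] = [1,3]"
  "lkq A2 [Suc 0,2,6,8] = [1,3]"
  "lkq A2 [1,2,6,9] = [2,11]"
  "lkq A2 [Suc 0,2,6,9] = [2,11]"
  "lkq A2 [1,2,7,8] = [4,5]"
  "lkq A2 [Suc 0,2,7,8] = [4,5]"
  "lkq A2 [1,2,7,9] = [1,6]"
  "lkq A2 [Suc 0,2,7,9] = [1,6]"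
  "lkq A2 [1,2,8,9] = [7,9]"
  "lkq A2 [Suc 0,2,8,9] = [7,9]"
  by (simp_all add: lkq.simps A2_def A2_1_2_def)

lemma A2_vals_1_3:
  "lkq A2 [1,3,4,5] = [3,10]"
  "lkq A2 [Suc 0,3,4,5] = [3,10]"
  "lkq A2 [1,3,4,6] = [0,2]"
  "lkq A2 [Suc 0,3,4,6] = [0,2]"
  "lkq A2 [1,3,4,7] = [5,8]"
  "lkq A2 [Suc 0,3,4,7] = [5,8]"
  "lkq A2 [1,3,4,8] = [1,11]"
  "lkq A2 [Suc 0,3,4,8] = [1,11]"
  "lkq A2 [1,3,4,9] = [7,13]"
  "lkq A2 [Suc 0,3,4,9] = [7,13]"
  "lkq A2 [1,3,5,6] = [8,11]"
  "lkq A2 [Suc 0,3,5,6] = [8,11]"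
  "lkq A2 [1,3,5,7] = [1,4]"
  "lkq A2 [Suc 0,3,5,7] = [1,4]"
  "lkq A2 [1,3,5,8] = [0,5]"
  "lkq A2 [Suc 0,3,5,8] = [0,5]"
  "lkq A2 [1,3,5,9] = [9,12]"
  "lkq A2 [Suc 0,3,5,9] = [9,12]"
  "lkq A2 [1,3,6,7] = [9,12]"
  "lkq A2 [Suc 0,3,6,7] = [9,12]"
  "lkq A2 [1,3,6,8] = [7,13]"
  "lkq A2 [Suc 0,3,6,8] = [7,13]"
  "lkq A2 [1,3,6,9] = [1,6]"
  "lkq A2 [Suc 0,3,6,9] = [1,6]"
  "lkq A2 [1,3,7,8] = [6,10]"
  "lkq A2 [Suc 0,3,7,8] = [6,10]"
  "lkq A2 [1,3,7,9] = [0,2]"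
  "lkq A2 [Suc 0,3,7,9] = [0,2]"
  "lkq A2 [1,3,8,9] = [3,4]"
  "lkq A2 [Suc 0,3,8,9] = [3,4]"
  by (simp_all add: lkq.simps A2_def A2_1_3_def)

lemma A2_vals_1_4:
  "lkq A2 [1,4,5,6] = [5,7]"
  "lkq A2 [Suc 0,4,5,6] = [5,7]"
  "lkq A2 [1,4,5,7] = [0,13]"
  "lkq A2 [Suc 0,4,5,7] = [0,13]"
  "lkq A2 [1,4,5,8] = [4,12]"
  "lkq A2 [Suc 0,4,5,8] = [4,12]"
  "lkq A2 [1,4,5,9] = [2,6]"
  "lkq A2 [Suc 0,4,5,9] = [2,6]"
  "lkq A2 [1,4,6,7] = [1,4]"
  "lkq A2 [Suc 0,4,6,7] = [1,4]"
  "lkq A2 [1,4,6,8] = [6,9]"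
  "lkq A2 [Suc 0,4,6,8] = [6,9]"
  "lkq A2 [1,4,6,9] = [3,12]"
  "lkq A2 [Suc 0,4,6,9] = [3,12]"
  "lkq A2 [1,4,7,8] = [2,3]"
  "lkq A2 [Suc 0,4,7,8] = [2,3]"
  "lkq A2 [1,4,7,9] = [9,11]"
  "lkq A2 [Suc 0,4,7,9] = [9,11]"
  "lkq A2 [1,4,8,9] = [8,10]"
  "lkq A2 [Suc 0,4,8,9] = [8,10]"
  by (simp_all add: lkq.simps A2_def A2_1_4_def)

lemma A2_vals_1_5:
  "lkq A2 [1,5,6,7] = [3,6]"
  "lkq A2 [Suc 0,5,6,7] = [3,6]"
  "lkq A2 [1,5,6,8] = [2,10]"
  "lkq A2 [Suc 0,5,6,8] = [2,10]"
  "lkq A2 [1,5,6,9] = [4,13]"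
  "lkq A2 [Suc 0,5,6,9] = [4,13]"
  "lkq A2 [1,5,7,8] = [7,9]"
  "lkq A2 [Suc 0,5,7,8] = [7,9]"
  "lkq A2 [1,5,7,9] = [5,8]"
  "lkq A2 [Suc 0,5,7,9] = [5,8]"
  "lkq A2 [1,5,8,9] = [1,11]"
  "lkq A2 [Suc 0,5,8,9] = [1,11]"
  by (simp_all add: lkq.simps A2_def A2_1_5_def)

lemma A2_vals_1_6:
  "lkq A2 [1,6,7,8] = [8,11]"
  "lkq A2 [Suc 0,6,7,8] = [8,11]"
  "lkq A2 [1,6,7,9] = [7,10]"
  "lkq A2 [Suc 0,6,7,9] = [7,10]"
  "lkq A2 [1,6,8,9] = [0,5]"
  "lkq A2 [Suc 0,6,8,9] = [0,5]"
  by (simp_all add: lkq.simps A2_def A2_1_6_def)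

lemma A2_vals_1_7:
  "lkq A2 [1,7,8,9] = [12,13]"
  "lkq A2 [Suc 0,7,8,9] = [12,13]"
  by (simp_all add: lkq.simps A2_def A2_1_7_def)

lemma A2_vals_2_3:
  "lkq A2 [2,3,4,5] = [0,5]"
  "lkq A2 [2,3,4,6] = [1,7]"
  "lkq A2 [2,3,4,7] = [4,13]"
  "lkq A2 [2,3,4,8] = [3,8]"
  "lkq A2 [2,3,4,9] = [2,12]"
  "lkq A2 [2,3,5,6] = [2,6]"
  "lkq A2 [2,3,5,7] = [9,12]"
  "lkq A2 [2,3,5,8] = [4,10]"
  "lkq A2 [2,3,5,9] = [1,11]"
  "lkq A2 [2,3,6,7] = [8,10]"
  "lkq A2 [2,3,6,8] = [9,11]"
  "lkq A2 [2,3,6,9] = [0,3]"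
  "lkq A2 [2,3,7,8] = [0,1]"
  "lkq A2 [2,3,7,9] = [5,7]"
  "lkq A2 [2,3,8,9] = [6,13]"
  by (simp_all add: lkq.simps A2_def A2_2_3_def)

lemma A2_vals_2_4:
  "lkq A2 [2,4,5,6] = [3,4]"
  "lkq A2 [2,4,5,7] = [6,8]"
  "lkq A2 [2,4,5,8] = [2,7]"
  "lkq A2 [2,4,5,9] = [9,10]"
  "lkq A2 [2,4,6,7] = [2,11]"
  "lkq A2 [2,4,6,8] = [5,12]"
  "lkq A2 [2,4,6,9] = [6,13]"
  "lkq A2 [2,4,7,8] = [9,10]"
  "lkq A2 [2,4,7,9] = [0,3]"
  "lkq A2 [2,4,8,9] = [1,11]"
  by (simp_all add: lkq.simps A2_def A2_2_4_def)

lemma A2_vals_2_5: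
  "lkq A2 [2,5,6,7] = [1,5]"
  "lkq A2 [2,5,6,8] = [0,13]"
  "lkq A2 [2,5,6,9] = [7,8]"
  "lkq A2 [2,5,7,8] = [3,11]"
  "lkq A2 [2,5,7,9] = [4,13]"
  "lkq A2 [2,5,8,9] = [5,12]"
  by (simp_all add: lkq.simps A2_def A2_2_5_def)

lemma A2_vals_2_6:
  "lkq A2 [2,6,7,8] = [6,7]"
  "lkq A2 [2,6,7,9] = [9,12]"
  "lkq A2 [2,6,8,9] = [4,10]"
  by (simp_all add: lkq.simps A2_def A2_2_6_def)

lemma A2_vals_2_7:
  "lkq A2 [2,7,8,9] = [2,8]"
  by (simp_all add: lkq.simps A2_def A2_2_7_def)

lemma A2_vals_3_4:
  "lkq A2 [3,4,5,6] = [12,13]"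
  "lkq A2 [3,4,5,7] = [2,11]"
  "lkq A2 [3,4,5,8] = [6,9]"
  "lkq A2 [3,4,5,9] = [4,8]"
  "lkq A2 [3,4,6,7] = [3,6]"
  "lkq A2 [3,4,6,8] = [4,10]"
  "lkq A2 [3,4,6,9] = [9,11]"
  "lkq A2 [3,4,7,8] = [7,12]"
  "lkq A2 [3,4,7,9] = [1,10]"
  "lkq A2 [3,4,8,9] = [0,5]"
  by (simp_all add: lkq.simps A2_def A2_3_4_def)

lemma A2_vals_3_5:
  "lkq A2 [3,5,6,7] = [0,7]"
  "lkq A2 [3,5,6,8] = [1,3]"
  "lkq A2 [3,5,6,9] = [5,10]"
  "lkq A2 [3,5,7,8] = [8,13]"
  "lkq A2 [3,5,7,9] = [3,6]"
  "lkq A2 [3,5,8,9] = [2,7]"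
  by (simp_all add: lkq.simps A2_def A2_3_5_def)

lemma A2_vals_3_6:
  "lkq A2 [3,6,7,8] = [2,5]"
  "lkq A2 [3,6,7,9] = [4,13]"
  "lkq A2 [3,6,8,9] = [8,12]"
  by (simp_all add: lkq.simps A2_def A2_3_6_def)

lemma A2_vals_3_7:
  "lkq A2 [3,7,8,9] = [9,11]"
  by (simp_all add: lkq.simps A2_def A2_3_7_def)

lemma A2_vals_4_5:
  "lkq A2 [4,5,6,7] = [9,10]"
  "lkq A2 [4,5,6,8] = [8,11]"
  "lkq A2 [4,5,6,9] = [0,1]"
  "lkq A2 [4,5,7,8] = [1,5]"
  "lkq A2 [4,5,7,9] = [7,12]"
  "lkq A2 [4,5,8,9] = [3,13]"
  by (simp_all add: lkq.simps A2_def A2_4_5_def)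

lemma A2_vals_4_6:
  "lkq A2 [4,6,7,8] = [0,13]"
  "lkq A2 [4,6,7,9] = [5,8]"
  "lkq A2 [4,6,8,9] = [2,7]"
  by (simp_all add: lkq.simps A2_def A2_4_6_def)

lemma A2_vals_4_7:
  "lkq A2 [4,7,8,9] = [4,6]"
  by (simp_all add: lkq.simps A2_def A2_4_7_def)

lemma A2_vals_5_6:
  "lkq A2 [5,6,7,8] = [4,12]"
  "lkq A2 [5,6,7,9] = [2,11]"
  "lkq A2 [5,6,8,9] = [6,9]"
  by (simp_all add: lkq.simps A2_def A2_5_6_def)

lemma A2_vals_5_7:
  "lkq A2 [5,7,8,9] = [0,10]"
  by (simp_all add: lkq.simps A2_def A2_5_7_def)

lemma A2_vals_6_7:
  "lkq A2 [6,7,8,9] = [1,3]"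
  by (simp_all add: lkq.simps A2_def A2_6_7_def)

lemmas A2_vals = A2_vals_0_1 A2_vals_0_2 A2_vals_0_3 A2_vals_0_4 A2_vals_0_5 A2_vals_0_6 A2_vals_0_7 A2_vals_1_2 A2_vals_1_3 A2_vals_1_4 A2_vals_1_5 A2_vals_1_6 A2_vals_1_7 A2_vals_2_3 A2_vals_2_4 A2_vals_2_5 A2_vals_2_6 A2_vals_2_7 A2_vals_3_4 A2_vals_3_5 A2_vals_3_6 A2_vals_3_7 A2_vals_4_5 A2_vals_4_6 A2_vals_4_7 A2_vals_5_6 A2_vals_5_7 A2_vals_6_7

lemma A2_cov:
  "cov_ok (lkq A2 [0,1,2,3]) 2 14"
  "cov_ok (lkq A2 [0,1,2,4]) 2 14"
  "cov_ok (lkq A2 [0,1,2,5]) 2 14"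
  "cov_ok (lkq A2 [0,1,2,6]) 2 14"
  "cov_ok (lkq A2 [0,1,2,7]) 2 14"
  "cov_ok (lkq A2 [0,1,2,8]) 2 14"
  "cov_ok (lkq A2 [0,1,2,9]) 2 14"
  "cov_ok (lkq A2 [0,1,3,4]) 2 14"
  "cov_ok (lkq A2 [0,1,3,5]) 2 14"
  "cov_ok (lkq A2 [0,1,3,6]) 2 14"
  "cov_ok (lkq A2 [0,1,3,7]) 2 14"
  "cov_ok (lkq A2 [0,1,3,8]) 2 14"
  "cov_ok (lkq A2 [0,1,3,9]) 2 14"
  "cov_ok (lkq A2 [0,1,4,5]) 2 14"
  "cov_ok (lkq A2 [0,1,4,6]) 2 14"
  "cov_ok (lkq A2 [0,1,4,7]) 2 14"
  "cov_ok (lkq A2 [0,1,4,8]) 2 14"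
  "cov_ok (lkq A2 [0,1,4,9]) 2 14"
  "cov_ok (lkq A2 [0,1,5,6]) 2 14"
  "cov_ok (lkq A2 [0,1,5,7]) 2 14"
  "cov_ok (lkq A2 [0,1,5,8]) 2 14"
  "cov_ok (lkq A2 [0,1,5,9]) 2 14"
  "cov_ok (lkq A2 [0,1,6,7]) 2 14"
  "cov_ok (lkq A2 [0,1,6,8]) 2 14"
  "cov_ok (lkq A2 [0,1,6,9]) 2 14"
  "cov_ok (lkq A2 [0,1,7,8]) 2 14"
  "cov_ok (lkq A2 [0,1,7,9]) 2 14"
  "cov_ok (lkq A2 [0,1,8,9]) 2 14"
  "cov_ok (lkq A2 [0,2,3,4]) 2 14"
  "cov_ok (lkq A2 [0,2,3,5]) 2 14"
  "cov_ok (lkq A2 [0,2,3,6]) 2 14"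
  "cov_ok (lkq A2 [0,2,3,7]) 2 14"
  "cov_ok (lkq A2 [0,2,3,8]) 2 14"
  "cov_ok (lkq A2 [0,2,3,9]) 2 14"
  "cov_ok (lkq A2 [0,2,4,5]) 2 14"
  "cov_ok (lkq A2 [0,2,4,6]) 2 14"
  "cov_ok (lkq A2 [0,2,4,7]) 2 14"
  "cov_ok (lkq A2 [0,2,4,8]) 2 14"
  "cov_ok (lkq A2 [0,2,4,9]) 2 14"
  "cov_ok (lkq A2 [0,2,5,6]) 2 14"
  "cov_ok (lkq A2 [0,2,5,7]) 2 14"
  "cov_ok (lkq A2 [0,2,5,8]) 2 14"
  "cov_ok (lkq A2 [0,2,5,9]) 2 14"
  "cov_ok (lkq A2 [0,2,6,7]) 2 14"
  "cov_ok (lkq A2 [0,2,6,8]) 2 14"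
  "cov_ok (lkq A2 [0,2,6,9]) 2 14"
  "cov_ok (lkq A2 [0,2,7,8]) 2 14"
  "cov_ok (lkq A2 [0,2,7,9]) 2 14"
  "cov_ok (lkq A2 [0,2,8,9]) 2 14"
  "cov_ok (lkq A2 [0,3,4,5]) 2 14"
  "cov_ok (lkq A2 [0,3,4,6]) 2 14"
  "cov_ok (lkq A2 [0,3,4,7]) 2 14"
  "cov_ok (lkq A2 [0,3,4,8]) 2 14"
  "cov_ok (lkq A2 [0,3,4,9]) 2 14"
  "cov_ok (lkq A2 [0,3,5,6]) 2 14"
  "cov_ok (lkq A2 [0,3,5,7]) 2 14"
  "cov_ok (lkq A2 [0,3,5,8]) 2 14"
  "cov_ok (lkq A2 [0,3,5,9]) 2 14"
  "cov_ok (lkq A2 [0,3,6,7]) 2 14"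
  "cov_ok (lkq A2 [0,3,6,8]) 2 14"
  "cov_ok (lkq A2 [0,3,6,9]) 2 14"
  "cov_ok (lkq A2 [0,3,7,8]) 2 14"
  "cov_ok (lkq A2 [0,3,7,9]) 2 14"
  "cov_ok (lkq A2 [0,3,8,9]) 2 14"
  "cov_ok (lkq A2 [0,4,5,6]) 2 14"
  "cov_ok (lkq A2 [0,4,5,7]) 2 14"
  "cov_ok (lkq A2 [0,4,5,8]) 2 14"
  "cov_ok (lkq A2 [0,4,5,9]) 2 14"
  "cov_ok (lkq A2 [0,4,6,7]) 2 14"
  "cov_ok (lkq A2 [0,4,6,8]) 2 14"
  "cov_ok (lkq A2 [0,4,6,9]) 2 14"
  "cov_ok (lkq A2 [0,4,7,8]) 2 14"
  "cov_ok (lkq A2 [0,4,7,9]) 2 14"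
  "cov_ok (lkq A2 [0,4,8,9]) 2 14"
  "cov_ok (lkq A2 [0,5,6,7]) 2 14"
  "cov_ok (lkq A2 [0,5,6,8]) 2 14"
  "cov_ok (lkq A2 [0,5,6,9]) 2 14"
  "cov_ok (lkq A2 [0,5,7,8]) 2 14"
  "cov_ok (lkq A2 [0,5,7,9]) 2 14"
  "cov_ok (lkq A2 [0,5,8,9]) 2 14"
  "cov_ok (lkq A2 [0,6,7,8]) 2 14"
  "cov_ok (lkq A2 [0,6,7,9]) 2 14"
  "cov_ok (lkq A2 [0,6,8,9]) 2 14"
  "cov_ok (lkq A2 [0,7,8,9]) 2 14"
  "cov_ok (lkq A2 [1,2,3,4]) 2 14"
  "cov_ok (lkq A2 [1,2,3,5]) 2 14"
  "cov_ok (lkq A2 [1,2,3,6]) 2 14"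
  "cov_ok (lkq A2 [1,2,3,7]) 2 14"
  "cov_ok (lkq A2 [1,2,3,8]) 2 14"
  "cov_ok (lkq A2 [1,2,3,9]) 2 14"
  "cov_ok (lkq A2 [1,2,4,5]) 2 14"
  "cov_ok (lkq A2 [1,2,4,6]) 2 14"
  "cov_ok (lkq A2 [1,2,4,7]) 2 14"
  "cov_ok (lkq A2 [1,2,4,8]) 2 14"
  "cov_ok (lkq A2 [1,2,4,9]) 2 14"
  "cov_ok (lkq A2 [1,2,5,6]) 2 14"
  "cov_ok (lkq A2 [1,2,5,7]) 2 14"
  "cov_ok (lkq A2 [1,2,5,8]) 2 14"
  "cov_ok (lkq A2 [1,2,5,9]) 2 14"
  "cov_ok (lkq A2 [1,2,6,7]) 2 14"
  "cov_ok (lkq A2 [1,2,6,8]) 2 14"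
  "cov_ok (lkq A2 [1,2,6,9]) 2 14"
  "cov_ok (lkq A2 [1,2,7,8]) 2 14"
  "cov_ok (lkq A2 [1,2,7,9]) 2 14"
  "cov_ok (lkq A2 [1,2,8,9]) 2 14"
  "cov_ok (lkq A2 [1,3,4,5]) 2 14"
  "cov_ok (lkq A2 [1,3,4,6]) 2 14"
  "cov_ok (lkq A2 [1,3,4,7]) 2 14"
  "cov_ok (lkq A2 [1,3,4,8]) 2 14"
  "cov_ok (lkq A2 [1,3,4,9]) 2 14"
  "cov_ok (lkq A2 [1,3,5,6]) 2 14"
  "cov_ok (lkq A2 [1,3,5,7]) 2 14"
  "cov_ok (lkq A2 [1,3,5,8]) 2 14"
  "cov_ok (lkq A2 [1,3,5,9]) 2 14"
  "cov_ok (lkq A2 [1,3,6,7]) 2 14"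
  "cov_ok (lkq A2 [1,3,6,8]) 2 14"
  "cov_ok (lkq A2 [1,3,6,9]) 2 14"
  "cov_ok (lkq A2 [1,3,7,8]) 2 14"
  "cov_ok (lkq A2 [1,3,7,9]) 2 14"
  "cov_ok (lkq A2 [1,3,8,9]) 2 14"
  "cov_ok (lkq A2 [1,4,5,6]) 2 14"
  "cov_ok (lkq A2 [1,4,5,7]) 2 14"
  "cov_ok (lkq A2 [1,4,5,8]) 2 14"
  "cov_ok (lkq A2 [1,4,5,9]) 2 14"
  "cov_ok (lkq A2 [1,4,6,7]) 2 14"
  "cov_ok (lkq A2 [1,4,6,8]) 2 14"
  "cov_ok (lkq A2 [1,4,6,9]) 2 14"
  "cov_ok (lkq A2 [1,4,7,8]) 2 14"
  "cov_ok (lkq A2 [1,4,7,9]) 2 14"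
  "cov_ok (lkq A2 [1,4,8,9]) 2 14"
  "cov_ok (lkq A2 [1,5,6,7]) 2 14"
  "cov_ok (lkq A2 [1,5,6,8]) 2 14"
  "cov_ok (lkq A2 [1,5,6,9]) 2 14"
  "cov_ok (lkq A2 [1,5,7,8]) 2 14"
  "cov_ok (lkq A2 [1,5,7,9]) 2 14"
  "cov_ok (lkq A2 [1,5,8,9]) 2 14"
  "cov_ok (lkq A2 [1,6,7,8]) 2 14"
  "cov_ok (lkq A2 [1,6,7,9]) 2 14"
  "cov_ok (lkq A2 [1,6,8,9]) 2 14"
  "cov_ok (lkq A2 [1,7,8,9]) 2 14"
  "cov_ok (lkq A2 [2,3,4,5]) 2 14"
  "cov_ok (lkq A2 [2,3,4,6]) 2 14"
  "cov_ok (lkq A2 [2,3,4,7]) 2 14"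
  "cov_ok (lkq A2 [2,3,4,8]) 2 14"
  "cov_ok (lkq A2 [2,3,4,9]) 2 14"
  "cov_ok (lkq A2 [2,3,5,6]) 2 14"
  "cov_ok (lkq A2 [2,3,5,7]) 2 14"
  "cov_ok (lkq A2 [2,3,5,8]) 2 14"
  "cov_ok (lkq A2 [2,3,5,9]) 2 14"
  "cov_ok (lkq A2 [2,3,6,7]) 2 14"
  "cov_ok (lkq A2 [2,3,6,8]) 2 14"
  "cov_ok (lkq A2 [2,3,6,9]) 2 14"
  "cov_ok (lkq A2 [2,3,7,8]) 2 14"
  "cov_ok (lkq A2 [2,3,7,9]) 2 14"
  "cov_ok (lkq A2 [2,3,8,9]) 2 14"
  "cov_ok (lkq A2 [2,4,5,6]) 2 14"
  "cov_ok (lkq A2 [2,4,5,7]) 2 14"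
  "cov_ok (lkq A2 [2,4,5,8]) 2 14"
  "cov_ok (lkq A2 [2,4,5,9]) 2 14"
  "cov_ok (lkq A2 [2,4,6,7]) 2 14"
  "cov_ok (lkq A2 [2,4,6,8]) 2 14"
  "cov_ok (lkq A2 [2,4,6,9]) 2 14"
  "cov_ok (lkq A2 [2,4,7,8]) 2 14"
  "cov_ok (lkq A2 [2,4,7,9]) 2 14"
  "cov_ok (lkq A2 [2,4,8,9]) 2 14"
  "cov_ok (lkq A2 [2,5,6,7]) 2 14"
  "cov_ok (lkq A2 [2,5,6,8]) 2 14"
  "cov_ok (lkq A2 [2,5,6,9]) 2 14"
  "cov_ok (lkq A2 [2,5,7,8]) 2 14"
  "cov_ok (lkq A2 [2,5,7,9]) 2 14"
  "cov_ok (lkq A2 [2,5,8,9]) 2 14"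
  "cov_ok (lkq A2 [2,6,7,8]) 2 14"
  "cov_ok (lkq A2 [2,6,7,9]) 2 14"
  "cov_ok (lkq A2 [2,6,8,9]) 2 14"
  "cov_ok (lkq A2 [2,7,8,9]) 2 14"
  "cov_ok (lkq A2 [3,4,5,6]) 2 14"
  "cov_ok (lkq A2 [3,4,5,7]) 2 14"
  "cov_ok (lkq A2 [3,4,5,8]) 2 14"
  "cov_ok (lkq A2 [3,4,5,9]) 2 14"
  "cov_ok (lkq A2 [3,4,6,7]) 2 14"
  "cov_ok (lkq A2 [3,4,6,8]) 2 14"
  "cov_ok (lkq A2 [3,4,6,9]) 2 14"
  "cov_ok (lkq A2 [3,4,7,8]) 2 14"
  "cov_ok (lkq A2 [3,4,7,9]) 2 14"
  "cov_ok (lkq A2 [3,4,8,9]) 2 14"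
  "cov_ok (lkq A2 [3,5,6,7]) 2 14"
  "cov_ok (lkq A2 [3,5,6,8]) 2 14"
  "cov_ok (lkq A2 [3,5,6,9]) 2 14"
  "cov_ok (lkq A2 [3,5,7,8]) 2 14"
  "cov_ok (lkq A2 [3,5,7,9]) 2 14"
  "cov_ok (lkq A2 [3,5,8,9]) 2 14"
  "cov_ok (lkq A2 [3,6,7,8]) 2 14"
  "cov_ok (lkq A2 [3,6,7,9]) 2 14"
  "cov_ok (lkq A2 [3,6,8,9]) 2 14"
  "cov_ok (lkq A2 [3,7,8,9]) 2 14"
  "cov_ok (lkq A2 [4,5,6,7]) 2 14"
  "cov_ok (lkq A2 [4,5,6,8]) 2 14"
  "cov_ok (lkq A2 [4,5,6,9]) 2 14"
  "cov_ok (lkq A2 [4,5,7,8]) 2 14"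
  "cov_ok (lkq A2 [4,5,7,9]) 2 14"
  "cov_ok (lkq A2 [4,5,8,9]) 2 14"
  "cov_ok (lkq A2 [4,6,7,8]) 2 14"
  "cov_ok (lkq A2 [4,6,7,9]) 2 14"
  "cov_ok (lkq A2 [4,6,8,9]) 2 14"
  "cov_ok (lkq A2 [4,7,8,9]) 2 14"
  "cov_ok (lkq A2 [5,6,7,8]) 2 14"
  "cov_ok (lkq A2 [5,6,7,9]) 2 14"
  "cov_ok (lkq A2 [5,6,8,9]) 2 14"
  "cov_ok (lkq A2 [5,7,8,9]) 2 14"
  "cov_ok (lkq A2 [6,7,8,9]) 2 14"
  by (simp_all add: A2_vals cov_ok_def)

lemma A2_sqs:
  "sqs_ok (lkq A2) [0,1,2] 14"
  "sqs_ok (lkq A2) [0,1,3] 14"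
  "sqs_ok (lkq A2) [0,1,4] 14"
  "sqs_ok (lkq A2) [0,1,5] 14"
  "sqs_ok (lkq A2) [0,1,6] 14"
  "sqs_ok (lkq A2) [0,1,7] 14"
  "sqs_ok (lkq A2) [0,1,8] 14"
  "sqs_ok (lkq A2) [0,1,9] 14"
  "sqs_ok (lkq A2) [0,2,3] 14"
  "sqs_ok (lkq A2) [0,2,4] 14"
  "sqs_ok (lkq A2) [0,2,5] 14"
  "sqs_ok (lkq A2) [0,2,6] 14"
  "sqs_ok (lkq A2) [0,2,7] 14"
  "sqs_ok (lkq A2) [0,2,8] 14"
  "sqs_ok (lkq A2) [0,2,9] 14"
  "sqs_ok (lkq A2) [0,3,4] 14"
  "sqs_ok (lkq A2) [0,3,5] 14"
  "sqs_ok (lkq A2) [0,3,6] 14"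
  "sqs_ok (lkq A2) [0,3,7] 14"
  "sqs_ok (lkq A2) [0,3,8] 14"
  "sqs_ok (lkq A2) [0,3,9] 14"
  "sqs_ok (lkq A2) [0,4,5] 14"
  "sqs_ok (lkq A2) [0,4,6] 14"
  "sqs_ok (lkq A2) [0,4,7] 14"
  "sqs_ok (lkq A2) [0,4,8] 14"
  "sqs_ok (lkq A2) [0,4,9] 14"
  "sqs_ok (lkq A2) [0,5,6] 14"
  "sqs_ok (lkq A2) [0,5,7] 14"
  "sqs_ok (lkq A2) [0,5,8] 14"
  "sqs_ok (lkq A2) [0,5,9] 14"
  "sqs_ok (lkq A2) [0,6,7] 14"
  "sqs_ok (lkq A2) [0,6,8] 14"
  "sqs_ok (lkq A2) [0,6,9] 14"
  "sqs_ok (lkq A2) [0,7,8] 14"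
  "sqs_ok (lkq A2) [0,7,9] 14"
  "sqs_ok (lkq A2) [0,8,9] 14"
  "sqs_ok (lkq A2) [1,2,3] 14"
  "sqs_ok (lkq A2) [1,2,4] 14"
  "sqs_ok (lkq A2) [1,2,5] 14"
  "sqs_ok (lkq A2) [1,2,6] 14"
  "sqs_ok (lkq A2) [1,2,7] 14"
  "sqs_ok (lkq A2) [1,2,8] 14"
  "sqs_ok (lkq A2) [1,2,9] 14"
  "sqs_ok (lkq A2) [1,3,4] 14"
  "sqs_ok (lkq A2) [1,3,5] 14"
  "sqs_ok (lkq A2) [1,3,6] 14"
  "sqs_ok (lkq A2) [1,3,7] 14"
  "sqs_ok (lkq A2) [1,3,8] 14"
  "sqs_ok (lkq A2) [1,3,9] 14"
  "sqs_ok (lkq A2) [1,4,5] 14"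
  "sqs_ok (lkq A2) [1,4,6] 14"
  "sqs_ok (lkq A2) [1,4,7] 14"
  "sqs_ok (lkq A2) [1,4,8] 14"
  "sqs_ok (lkq A2) [1,4,9] 14"
  "sqs_ok (lkq A2) [1,5,6] 14"
  "sqs_ok (lkq A2) [1,5,7] 14"
  "sqs_ok (lkq A2) [1,5,8] 14"
  "sqs_ok (lkq A2) [1,5,9] 14"
  "sqs_ok (lkq A2) [1,6,7] 14"
  "sqs_ok (lkq A2) [1,6,8] 14"
  "sqs_ok (lkq A2) [1,6,9] 14"
  "sqs_ok (lkq A2) [1,7,8] 14"
  "sqs_ok (lkq A2) [1,7,9] 14"
  "sqs_ok (lkq A2) [1,8,9] 14"
  "sqs_ok (lkq A2) [2,3,4] 14"
  "sqs_ok (lkq A2) [2,3,5] 14"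
  "sqs_ok (lkq A2) [2,3,6] 14"
  "sqs_ok (lkq A2) [2,3,7] 14"
  "sqs_ok (lkq A2) [2,3,8] 14"
  "sqs_ok (lkq A2) [2,3,9] 14"
  "sqs_ok (lkq A2) [2,4,5] 14"
  "sqs_ok (lkq A2) [2,4,6] 14"
  "sqs_ok (lkq A2) [2,4,7] 14"
  "sqs_ok (lkq A2) [2,4,8] 14"
  "sqs_ok (lkq A2) [2,4,9] 14"
  "sqs_ok (lkq A2) [2,5,6] 14"
  "sqs_ok (lkq A2) [2,5,7] 14"
  "sqs_ok (lkq A2) [2,5,8] 14"
  "sqs_ok (lkq A2) [2,5,9] 14"
  "sqs_ok (lkq A2) [2,6,7] 14"
  "sqs_ok (lkq A2) [2,6,8] 14"
  "sqs_ok (lkq A2) [2,6,9] 14"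
  "sqs_ok (lkq A2) [2,7,8] 14"
  "sqs_ok (lkq A2) [2,7,9] 14"
  "sqs_ok (lkq A2) [2,8,9] 14"
  "sqs_ok (lkq A2) [3,4,5] 14"
  "sqs_ok (lkq A2) [3,4,6] 14"
  "sqs_ok (lkq A2) [3,4,7] 14"
  "sqs_ok (lkq A2) [3,4,8] 14"
  "sqs_ok (lkq A2) [3,4,9] 14"
  "sqs_ok (lkq A2) [3,5,6] 14"
  "sqs_ok (lkq A2) [3,5,7] 14"
  "sqs_ok (lkq A2) [3,5,8] 14"
  "sqs_ok (lkq A2) [3,5,9] 14"
  "sqs_ok (lkq A2) [3,6,7] 14"
  "sqs_ok (lkq A2) [3,6,8] 14"
  "sqs_ok (lkq A2) [3,6,9] 14"
  "sqs_ok (lkq A2) [3,7,8] 14"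
  "sqs_ok (lkq A2) [3,7,9] 14"
  "sqs_ok (lkq A2) [3,8,9] 14"
  "sqs_ok (lkq A2) [4,5,6] 14"
  "sqs_ok (lkq A2) [4,5,7] 14"
  "sqs_ok (lkq A2) [4,5,8] 14"
  "sqs_ok (lkq A2) [4,5,9] 14"
  "sqs_ok (lkq A2) [4,6,7] 14"
  "sqs_ok (lkq A2) [4,6,8] 14"
  "sqs_ok (lkq A2) [4,6,9] 14"
  "sqs_ok (lkq A2) [4,7,8] 14"
  "sqs_ok (lkq A2) [4,7,9] 14"
  "sqs_ok (lkq A2) [4,8,9] 14"
  "sqs_ok (lkq A2) [5,6,7] 14"
  "sqs_ok (lkq A2) [5,6,8] 14"
  "sqs_ok (lkq A2) [5,6,9] 14"
  "sqs_ok (lkq A2) [5,7,8] 14"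
  "sqs_ok (lkq A2) [5,7,9] 14"
  "sqs_ok (lkq A2) [5,8,9] 14"
  "sqs_ok (lkq A2) [6,7,8] 14"
  "sqs_ok (lkq A2) [6,7,9] 14"
  "sqs_ok (lkq A2) [6,8,9] 14"
  "sqs_ok (lkq A2) [7,8,9] 14"
  by (simp_all add: A2_vals sqs_ok_def upt10 upt14 upt21)

definition A3_0_1 :: "(nat list \<times> nat list) list" where
  "A3_0_1 = [([0,1,2,3],[0,1,2]), ([0,1,2,4],[3,4,5]), ([0,1,2,5],[6,7,8]), ([0,1,2,6],[9,10,11]), ([0,1,2,7],[12,13,14]), ([0,1,2,8],[15,16,17]), ([0,1,2,9],[18,19,20]), ([0,1,3,4],[6,15,16]), ([0,1,3,5],[12,18,19]), ([0,1,3,6],[3,13,17]), ([0,1,3,7],[7,9,20]), ([0,1,3,8],[8,10,14]), ([0,1,3,9],[4,5,11]), ([0,1,4,5],[9,10,11]), ([0,1,4,6],[0,14,18]), ([0,1,4,7],[8,17,19]), ([0,1,4,8],[7,12,20]), ([0,1,4,9],[1,2,13]), ([0,1,5,6],[1,15,20]), ([0,1,5,7],[0,3,4]), ([0,1,5,8],[2,5,13]), ([0,1,5,9],[14,16,17]), ([0,1,6,7],[2,5,16]), ([0,1,6,8],[4,6,19]), ([0,1,6,9],[7,8,12]), ([0,1,7,8],[1,11,18]), ([0,1,7,9],[6,10,15]), ([0,1,8,9],[0,3,9])]"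

definition A3_0_2 :: "(nat list \<times> nat list) list" where
  "A3_0_2 = [([0,2,3,4],[12,14,18]), ([0,2,3,5],[3,5,11]), ([0,2,3,6],[7,15,19]), ([0,2,3,7],[4,6,16]), ([0,2,3,8],[9,13,20]), ([0,2,3,9],[8,10,17]), ([0,2,4,5],[2,17,20]), ([0,2,4,6],[6,8,13]), ([0,2,4,7],[1,7,9]), ([0,2,4,8],[10,11,19]), ([0,2,4,9],[0,15,16]), ([0,2,5,6],[0,14,16]), ([0,2,5,7],[10,15,19]), ([0,2,5,8],[1,4,18]), ([0,2,5,9],[9,12,13]), ([0,2,6,7],[17,18,20]), ([0,2,6,8],[2,5,12]), ([0,2,6,9],[1,3,4]), ([0,2,7,8],[0,3,8]), ([0,2,7,9],[2,5,11]), ([0,2,8,9],[6,7,14])]"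

definition A3_0_3 :: "(nat list \<times> nat list) list" where
  "A3_0_3 = [([0,3,4,5],[1,8,13]), ([0,3,4,6],[2,5,20]), ([0,3,4,7],[0,10,11]), ([0,3,4,8],[3,4,17]), ([0,3,4,9],[7,9,19]), ([0,3,5,6],[4,9,10]), ([0,3,5,7],[2,14,17]), ([0,3,5,8],[6,7,16]), ([0,3,5,9],[0,15,20]), ([0,3,6,7],[1,8,12]), ([0,3,6,8],[0,11,18]), ([0,3,6,9],[6,14,16]), ([0,3,7,8],[5,15,19]), ([0,3,7,9],[3,13,18]), ([0,3,8,9],[1,2,12])]"

definition A3_0_4 :: "(nat list \<times> nat list) list" where
  "A3_0_4 = [([0,4,5,6],[7,12,19]), ([0,4,5,7],[5,16,18]), ([0,4,5,8],[0,14,15]), ([0,4,5,9],[3,4,6]), ([0,4,6,7],[3,4,15]), ([0,4,6,8],[1,9,16]), ([0,4,6,9],[10,11,17]), ([0,4,7,8],[2,6,13]), ([0,4,7,9],[12,14,20]), ([0,4,8,9],[5,8,18])]"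

definition A3_0_5 :: "(nat list \<times> nat list) list" where
  "A3_0_5 = [([0,5,6,7],[6,11,13]), ([0,5,6,8],[3,8,17]), ([0,5,6,9],[2,5,18]), ([0,5,7,8],[9,12,20]), ([0,5,7,9],[1,7,8]), ([0,5,8,9],[10,11,19])]"

definition A3_0_6 :: "(nat list \<times> nat list) list" where
  "A3_0_6 = [([0,6,7,8],[7,10,14]), ([0,6,7,9],[0,9,19]), ([0,6,8,9],[13,15,20])]"

definition A3_0_7 :: "(nat list \<times> nat list) list" where
  "A3_0_7 = [([0,7,8,9],[4,16,17])]"

definition A3_1_2 :: "(nat list \<times> nat list) list" where
  "A3_1_2 = [([1,2,3,4],[10,11,13]), ([1,2,3,5],[9,15,17]), ([1,2,3,6],[6,8,20]), ([1,2,3,7],[3,5,18]), ([1,2,3,8],[4,7,19]), ([1,2,3,9],[12,14,16]), ([1,2,4,5],[14,18,19]), ([1,2,4,6],[12,16,17]), ([1,2,4,7],[0,15,20]), ([1,2,4,8],[1,2,8]), ([1,2,4,9],[6,7,9]), ([1,2,5,6],[4,5,13]), ([1,2,5,7],[2,11,16]), ([1,2,5,8],[0,12,20]), ([1,2,5,9],[1,3,10]), ([1,2,6,7],[1,7,19]), ([1,2,6,8],[3,14,18]), ([1,2,6,9],[0,2,15]), ([1,2,7,8],[6,9,10]), ([1,2,7,9],[4,8,17]), ([1,2,8,9],[5,11,13])]"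

definition A3_1_3 :: "(nat list \<times> nat list) list" where
  "A3_1_3 = [([1,3,4,5],[4,5,20]), ([1,3,4,6],[1,7,19]), ([1,3,4,7],[2,12,14]), ([1,3,4,8],[0,9,18]), ([1,3,4,9],[3,8,17]), ([1,3,5,6],[0,14,16]), ([1,3,5,7],[6,8,10]), ([1,3,5,8],[1,3,11]), ([1,3,5,9],[2,7,13]), ([1,3,6,7],[4,11,15]), ([1,3,6,8],[2,5,12]), ([1,3,6,9],[9,10,18]), ([1,3,7,8],[13,16,17]), ([1,3,7,9],[0,1,19]), ([1,3,8,9],[6,15,20])]"

definition A3_1_4 :: "(nat list \<times> nat list) list" where
  "A3_1_4 = [([1,4,5,6],[2,3,8]), ([1,4,5,7],[1,7,13]), ([1,4,5,8],[6,16,17]), ([1,4,5,9],[0,12,15]), ([1,4,6,7],[6,9,10]), ([1,4,6,8],[11,13,15]), ([1,4,6,9],[4,5,20]), ([1,4,7,8],[3,4,5]), ([1,4,7,9],[11,16,18]), ([1,4,8,9],[10,14,19])]"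

definition A3_1_5 :: "(nat list \<times> nat list) list" where
  "A3_1_5 = [([1,5,6,7],[12,17,18]), ([1,5,6,8],[7,9,10]), ([1,5,6,9],[6,11,19]), ([1,5,7,8],[14,15,19]), ([1,5,7,9],[5,9,20]), ([1,5,8,9],[4,8,18])]"

definition A3_1_6 :: "(nat list \<times> nat list) list" where
  "A3_1_6 = [([1,6,7,8],[0,8,20]), ([1,6,7,9],[3,13,14]), ([1,6,8,9],[1,16,17])]"

definition A3_1_7 :: "(nat list \<times> nat list) list" where
  "A3_1_7 = [([1,7,8,9],[2,7,12])]"

definition A3_2_3 :: "(nat list \<times> nat list) list" where
  "A3_2_3 = [([2,3,4,5],[0,7,16]), ([2,3,4,6],[3,4,9]), ([2,3,4,7],[8,17,19]), ([2,3,4,8],[5,6,15]), ([2,3,4,9],[1,2,20]), ([2,3,5,6],[2,12,18]), ([2,3,5,7],[1,13,20]), ([2,3,5,8],[8,10,14]), ([2,3,5,9],[4,6,19]), ([2,3,6,7],[0,10,14]), ([2,3,6,8],[1,16,17]), ([2,3,6,9],[5,11,13]), ([2,3,7,8],[2,11,12]), ([2,3,7,9],[7,9,15]), ([2,3,8,9],[0,3,18])]"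

definition A3_2_4 :: "(nat list \<times> nat list) list" where
  "A3_2_4 = [([2,4,5,6],[1,10,15]), ([2,4,5,7],[4,6,12]), ([2,4,5,8],[3,9,13]), ([2,4,5,9],[5,8,11]), ([2,4,6,7],[2,5,11]), ([2,4,6,8],[0,7,20]), ([2,4,6,9],[14,18,19]), ([2,4,7,8],[14,16,18]), ([2,4,7,9],[3,10,13]), ([2,4,8,9],[4,12,17])]"

definition A3_2_5 :: "(nat list \<times> nat list) list" where
  "A3_2_5 = [([2,5,6,7],[3,8,9]), ([2,5,6,8],[6,11,19]), ([2,5,6,9],[7,17,20]), ([2,5,7,8],[5,7,17]), ([2,5,7,9],[0,14,18]), ([2,5,8,9],[2,15,16])]"

definition A3_2_6 :: "(nat list \<times> nat list) list" where
  "A3_2_6 = [([2,6,7,8],[4,13,15]), ([2,6,7,9],[6,12,16]), ([2,6,8,9],[8,9,10])]"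

definition A3_2_7 :: "(nat list \<times> nat list) list" where
  "A3_2_7 = [([2,7,8,9],[1,19,20])]"

definition A3_3_4 :: "(nat list \<times> nat list) list" where
  "A3_3_4 = [([3,4,5,6],[6,11,17]), ([3,4,5,7],[3,9,15]), ([3,4,5,8],[2,12,19]), ([3,4,5,9],[10,14,18]), ([3,4,6,7],[13,16,18]), ([3,4,6,8],[8,10,14]), ([3,4,6,9],[0,12,15]), ([3,4,7,8],[1,7,20]), ([3,4,7,9],[4,5,6]), ([3,4,8,9],[11,13,16])]"

definition A3_3_5 :: "(nat list \<times> nat list) list" where
  "A3_3_5 = [([3,5,6,7],[5,7,19]), ([3,5,6,8],[13,15,20]), ([3,5,6,9],[1,3,8]), ([3,5,7,8],[0,4,18]), ([3,5,7,9],[11,12,16]), ([3,5,8,9],[5,9,17])]"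

definition A3_3_6 :: "(nat list \<times> nat list) list" where
  "A3_3_6 = [([3,6,7,8],[3,6,9]), ([3,6,7,9],[2,17,20]), ([3,6,8,9],[4,7,19])]"

definition A3_3_7 :: "(nat list \<times> nat list) list" where
  "A3_3_7 = [([3,7,8,9],[8,10,14])]"

definition A3_4_5 :: "(nat list \<times> nat list) list" where
  "A3_4_5 = [([4,5,6,7],[0,14,20]), ([4,5,6,8],[4,5,18]), ([4,5,6,9],[9,13,16]), ([4,5,7,8],[8,10,11]), ([4,5,7,9],[2,17,19]), ([4,5,8,9],[1,7,20])]"

definition A3_4_6 :: "(nat list \<times> nat list) list" where
  "A3_4_6 = [([4,6,7,8],[12,17,19]), ([4,6,7,9],[1,7,8]), ([4,6,8,9],[2,3,6])]"

definition A3_4_7 :: "(nat list \<times> nat list) list" where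
  "A3_4_7 = [([4,7,8,9],[0,9,15])]"

definition A3_5_6 :: "(nat list \<times> nat list) list" where
  "A3_5_6 = [([5,6,7,8],[1,2,16]), ([5,6,7,9],[4,10,15]), ([5,6,8,9],[0,12,14])]"

definition A3_5_7 :: "(nat list \<times> nat list) list" where
  "A3_5_7 = [([5,7,8,9],[3,6,13])]"

definition A3_6_7 :: "(nat list \<times> nat list) list" where
  "A3_6_7 = [([6,7,8,9],[5,11,18])]"

definition A3 :: "(nat list \<times> nat list) list list list" where
  "A3 = [[[], A3_0_1, A3_0_2, A3_0_3, A3_0_4, A3_0_5, A3_0_6, A3_0_7, [], []],
    [[], [], A3_1_2, A3_1_3, A3_1_4, A3_1_5, A3_1_6, A3_1_7, [], []],
    [[], [], [], A3_2_3, A3_2_4, A3_2_5, A3_2_6, A3_2_7, [], []],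
    [[], [], [], [], A3_3_4, A3_3_5, A3_3_6, A3_3_7, [], []],
    [[], [], [], [], [], A3_4_5, A3_4_6, A3_4_7, [], []],
    [[], [], [], [], [], [], A3_5_6, A3_5_7, [], []],
    [[], [], [], [], [], [], [], A3_6_7, [], []],
    [[], [], [], [], [], [], [], [], [], []],
    [[], [], [], [], [], [], [], [], [], []],
    [[], [], [], [], [], [], [], [], [], []]]"

lemma A3_vals_0_1:
  "lkq A3 [0,1,2,3] = [0,1,2]"
  "lkq A3 [0,Suc 0,2,3] = [0,1,2]"
  "lkq A3 [0,1,2,4] = [3,4,5]"
  "lkq A3 [0,Suc 0,2,4] = [3,4,5]"
  "lkq A3 [0,1,2,5] = [6,7,8]"
  "lkq A3 [0,Suc 0,2,5] = [6,7,8]"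
  "lkq A3 [0,1,2,6] = [9,10,11]"
  "lkq A3 [0,Suc 0,2,6] = [9,10,11]"
  "lkq A3 [0,1,2,7] = [12,13,14]"
  "lkq A3 [0,Suc 0,2,7] = [12,13,14]"
  "lkq A3 [0,1,2,8] = [15,16,17]"
  "lkq A3 [0,Suc 0,2,8] = [15,16,17]"
  "lkq A3 [0,1,2,9] = [18,19,20]"
  "lkq A3 [0,Suc 0,2,9] = [18,19,20]"
  "lkq A3 [0,1,3,4] = [6,15,16]"
  "lkq A3 [0,Suc 0,3,4] = [6,15,16]"
  "lkq A3 [0,1,3,5] = [12,18,19]"
  "lkq A3 [0,Suc 0,3,5] = [12,18,19]"
  "lkq A3 [0,1,3,6] = [3,13,17]"
  "lkq A3 [0,Suc 0,3,6] = [3,13,17]"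
  "lkq A3 [0,1,3,7] = [7,9,20]"
  "lkq A3 [0,Suc 0,3,7] = [7,9,20]"
  "lkq A3 [0,1,3,8] = [8,10,14]"
  "lkq A3 [0,Suc 0,3,8] = [8,10,14]"
  "lkq A3 [0,1,3,9] = [4,5,11]"
  "lkq A3 [0,Suc 0,3,9] = [4,5,11]"
  "lkq A3 [0,1,4,5] = [9,10,11]"
  "lkq A3 [0,Suc 0,4,5] = [9,10,11]"
  "lkq A3 [0,1,4,6] = [0,14,18]"
  "lkq A3 [0,Suc 0,4,6] = [0,14,18]"
  "lkq A3 [0,1,4,7] = [8,17,19]"
  "lkq A3 [0,Suc 0,4,7] = [8,17,19]"
  "lkq A3 [0,1,4,8] = [7,12,20]"
  "lkq A3 [0,Suc 0,4,8] = [7,12,20]"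
  "lkq A3 [0,1,4,9] = [1,2,13]"
  "lkq A3 [0,Suc 0,4,9] = [1,2,13]"
  "lkq A3 [0,1,5,6] = [1,15,20]"
  "lkq A3 [0,Suc 0,5,6] = [1,15,20]"
  "lkq A3 [0,1,5,7] = [0,3,4]"
  "lkq A3 [0,Suc 0,5,7] = [0,3,4]"
  "lkq A3 [0,1,5,8] = [2,5,13]"
  "lkq A3 [0,Suc 0,5,8] = [2,5,13]"
  "lkq A3 [0,1,5,9] = [14,16,17]"
  "lkq A3 [0,Suc 0,5,9] = [14,16,17]"
  "lkq A3 [0,1,6,7] = [2,5,16]"
  "lkq A3 [0,Suc 0,6,7] = [2,5,16]"
  "lkq A3 [0,1,6,8] = [4,6,19]"
  "lkq A3 [0,Suc 0,6,8] = [4,6,19]"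
  "lkq A3 [0,1,6,9] = [7,8,12]"
  "lkq A3 [0,Suc 0,6,9] = [7,8,12]"
  "lkq A3 [0,1,7,8] = [1,11,18]"
  "lkq A3 [0,Suc 0,7,8] = [1,11,18]"
  "lkq A3 [0,1,7,9] = [6,10,15]"
  "lkq A3 [0,Suc 0,7,9] = [6,10,15]"
  "lkq A3 [0,1,8,9] = [0,3,9]"
  "lkq A3 [0,Suc 0,8,9] = [0,3,9]"
  by (simp_all add: lkq.simps A3_def A3_0_1_def)

lemma A3_vals_0_2:
  "lkq A3 [0,2,3,4] = [12,14,18]"
  "lkq A3 [0,2,3,5] = [3,5,11]"
  "lkq A3 [0,2,3,6] = [7,15,19]"
  "lkq A3 [0,2,3,7] = [4,6,16]"
  "lkq A3 [0,2,3,8] = [9,13,20]"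
  "lkq A3 [0,2,3,9] = [8,10,17]"
  "lkq A3 [0,2,4,5] = [2,17,20]"
  "lkq A3 [0,2,4,6] = [6,8,13]"
  "lkq A3 [0,2,4,7] = [1,7,9]"
  "lkq A3 [0,2,4,8] = [10,11,19]"
  "lkq A3 [0,2,4,9] = [0,15,16]"
  "lkq A3 [0,2,5,6] = [0,14,16]"
  "lkq A3 [0,2,5,7] = [10,15,19]"
  "lkq A3 [0,2,5,8] = [1,4,18]"
  "lkq A3 [0,2,5,9] = [9,12,13]"
  "lkq A3 [0,2,6,7] = [17,18,20]"
  "lkq A3 [0,2,6,8] = [2,5,12]"
  "lkq A3 [0,2,6,9] = [1,3,4]"
  "lkq A3 [0,2,7,8] = [0,3,8]"
  "lkq A3 [0,2,7,9] = [2,5,11]"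
  "lkq A3 [0,2,8,9] = [6,7,14]"
  by (simp_all add: lkq.simps A3_def A3_0_2_def)

lemma A3_vals_0_3:
  "lkq A3 [0,3,4,5] = [1,8,13]"
  "lkq A3 [0,3,4,6] = [2,5,20]"
  "lkq A3 [0,3,4,7] = [0,10,11]"
  "lkq A3 [0,3,4,8] = [3,4,17]"
  "lkq A3 [0,3,4,9] = [7,9,19]"
  "lkq A3 [0,3,5,6] = [4,9,10]"
  "lkq A3 [0,3,5,7] = [2,14,17]"
  "lkq A3 [0,3,5,8] = [6,7,16]"
  "lkq A3 [0,3,5,9] = [0,15,20]"
  "lkq A3 [0,3,6,7] = [1,8,12]"
  "lkq A3 [0,3,6,8] = [0,11,18]"
  "lkq A3 [0,3,6,9] = [6,14,16]"
  "lkq A3 [0,3,7,8] = [5,15,19]"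
  "lkq A3 [0,3,7,9] = [3,13,18]"
  "lkq A3 [0,3,8,9] = [1,2,12]"
  by (simp_all add: lkq.simps A3_def A3_0_3_def)

lemma A3_vals_0_4:
  "lkq A3 [0,4,5,6] = [7,12,19]"
  "lkq A3 [0,4,5,7] = [5,16,18]"
  "lkq A3 [0,4,5,8] = [0,14,15]"
  "lkq A3 [0,4,5,9] = [3,4,6]"
  "lkq A3 [0,4,6,7] = [3,4,15]"
  "lkq A3 [0,4,6,8] = [1,9,16]"
  "lkq A3 [0,4,6,9] = [10,11,17]"
  "lkq A3 [0,4,7,8] = [2,6,13]"
  "lkq A3 [0,4,7,9] = [12,14,20]"
  "lkq A3 [0,4,8,9] = [5,8,18]"
  by (simp_all add: lkq.simps A3_def A3_0_4_def)

lemma A3_vals_0_5: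
  "lkq A3 [0,5,6,7] = [6,11,13]"
  "lkq A3 [0,5,6,8] = [3,8,17]"
  "lkq A3 [0,5,6,9] = [2,5,18]"
  "lkq A3 [0,5,7,8] = [9,12,20]"
  "lkq A3 [0,5,7,9] = [1,7,8]"
  "lkq A3 [0,5,8,9] = [10,11,19]"
  by (simp_all add: lkq.simps A3_def A3_0_5_def)

lemma A3_vals_0_6:
  "lkq A3 [0,6,7,8] = [7,10,14]"
  "lkq A3 [0,6,7,9] = [0,9,19]"
  "lkq A3 [0,6,8,9] = [13,15,20]"
  by (simp_all add: lkq.simps A3_def A3_0_6_def)

lemma A3_vals_0_7:
  "lkq A3 [0,7,8,9] = [4,16,17]"
  by (simp_all add: lkq.simps A3_def A3_0_7_def)

lemma A3_vals_1_2:
  "lkq A3 [1,2,3,4] = [10,11,13]"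
  "lkq A3 [Suc 0,2,3,4] = [10,11,13]"
  "lkq A3 [1,2,3,5] = [9,15,17]"
  "lkq A3 [Suc 0,2,3,5] = [9,15,17]"
  "lkq A3 [1,2,3,6] = [6,8,20]"
  "lkq A3 [Suc 0,2,3,6] = [6,8,20]"
  "lkq A3 [1,2,3,7] = [3,5,18]"
  "lkq A3 [Suc 0,2,3,7] = [3,5,18]"
  "lkq A3 [1,2,3,8] = [4,7,19]"
  "lkq A3 [Suc 0,2,3,8] = [4,7,19]"
  "lkq A3 [1,2,3,9] = [12,14,16]"
  "lkq A3 [Suc 0,2,3,9] = [12,14,16]"
  "lkq A3 [1,2,4,5] = [14,18,19]"
  "lkq A3 [Suc 0,2,4,5] = [14,18,19]"
  "lkq A3 [1,2,4,6] = [12,16,17]"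
  "lkq A3 [Suc 0,2,4,6] = [12,16,17]"
  "lkq A3 [1,2,4,7] = [0,15,20]"
  "lkq A3 [Suc 0,2,4,7] = [0,15,20]"
  "lkq A3 [1,2,4,8] = [1,2,8]"
  "lkq A3 [Suc 0,2,4,8] = [1,2,8]"
  "lkq A3 [1,2,4,9] = [6,7,9]"
  "lkq A3 [Suc 0,2,4,9] = [6,7,9]"
  "lkq A3 [1,2,5,6] = [4,5,13]"
  "lkq A3 [Suc 0,2,5,6] = [4,5,13]"
  "lkq A3 [1,2,5,7] = [2,11,16]"
  "lkq A3 [Suc 0,2,5,7] = [2,11,16]"
  "lkq A3 [1,2,5,8] = [0,12,20]"
  "lkq A3 [Suc 0,2,5,8] = [0,12,20]"
  "lkq A3 [1,2,5,9] = [1,3,10]"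
  "lkq A3 [Suc 0,2,5,9] = [1,3,10]"
  "lkq A3 [1,2,6,7] = [1,7,19]"
  "lkq A3 [Suc 0,2,6,7] = [1,7,19]"
  "lkq A3 [1,2,6,8] = [3,14,18]"
  "lkq A3 [Suc 0,2,6,8] = [3,14,18]"
  "lkq A3 [1,2,6,9] = [0,2,15]"
  "lkq A3 [Suc 0,2,6,9] = [0,2,15]"
  "lkq A3 [1,2,7,8] = [6,9,10]"
  "lkq A3 [Suc 0,2,7,8] = [6,9,10]"
  "lkq A3 [1,2,7,9] = [4,8,17]"
  "lkq A3 [Suc 0,2,7,9] = [4,8,17]"
  "lkq A3 [1,2,8,9] = [5,11,13]"
  "lkq A3 [Suc 0,2,8,9] = [5,11,13]"
  by (simp_all add: lkq.simps A3_def A3_1_2_def)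

lemma A3_vals_1_3:
  "lkq A3 [1,3,4,5] = [4,5,20]"
  "lkq A3 [Suc 0,3,4,5] = [4,5,20]"
  "lkq A3 [1,3,4,6] = [1,7,19]"
  "lkq A3 [Suc 0,3,4,6] = [1,7,19]"
  "lkq A3 [1,3,4,7] = [2,12,14]"
  "lkq A3 [Suc 0,3,4,7] = [2,12,14]"
  "lkq A3 [1,3,4,8] = [0,9,18]"
  "lkq A3 [Suc 0,3,4,8] = [0,9,18]"
  "lkq A3 [1,3,4,9] = [3,8,17]"
  "lkq A3 [Suc 0,3,4,9] = [3,8,17]"
  "lkq A3 [1,3,5,6] = [0,14,16]"
  "lkq A3 [Suc 0,3,5,6] = [0,14,16]"
  "lkq A3 [1,3,5,7] = [6,8,10]"
  "lkq A3 [Suc 0,3,5,7] = [6,8,10]"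
  "lkq A3 [1,3,5,8] = [1,3,11]"
  "lkq A3 [Suc 0,3,5,8] = [1,3,11]"
  "lkq A3 [1,3,5,9] = [2,7,13]"
  "lkq A3 [Suc 0,3,5,9] = [2,7,13]"
  "lkq A3 [1,3,6,7] = [4,11,15]"
  "lkq A3 [Suc 0,3,6,7] = [4,11,15]"
  "lkq A3 [1,3,6,8] = [2,5,12]"
  "lkq A3 [Suc 0,3,6,8] = [2,5,12]"
  "lkq A3 [1,3,6,9] = [9,10,18]"
  "lkq A3 [Suc 0,3,6,9] = [9,10,18]"
  "lkq A3 [1,3,7,8] = [13,16,17]"
  "lkq A3 [Suc 0,3,7,8] = [13,16,17]"
  "lkq A3 [1,3,7,9] = [0,1,19]"
  "lkq A3 [Suc 0,3,7,9] = [0,1,19]"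
  "lkq A3 [1,3,8,9] = [6,15,20]"
  "lkq A3 [Suc 0,3,8,9] = [6,15,20]"
  by (simp_all add: lkq.simps A3_def A3_1_3_def)

lemma A3_vals_1_4:
  "lkq A3 [1,4,5,6] = [2,3,8]"
  "lkq A3 [Suc 0,4,5,6] = [2,3,8]"
  "lkq A3 [1,4,5,7] = [1,7,13]"
  "lkq A3 [Suc 0,4,5,7] = [1,7,13]"
  "lkq A3 [1,4,5,8] = [6,16,17]"
  "lkq A3 [Suc 0,4,5,8] = [6,16,17]"
  "lkq A3 [1,4,5,9] = [0,12,15]"
  "lkq A3 [Suc 0,4,5,9] = [0,12,15]"
  "lkq A3 [1,4,6,7] = [6,9,10]"
  "lkq A3 [Suc 0,4,6,7] = [6,9,10]"
  "lkq A3 [1,4,6,8] = [11,13,15]"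
  "lkq A3 [Suc 0,4,6,8] = [11,13,15]"
  "lkq A3 [1,4,6,9] = [4,5,20]"
  "lkq A3 [Suc 0,4,6,9] = [4,5,20]"
  "lkq A3 [1,4,7,8] = [3,4,5]"
  "lkq A3 [Suc 0,4,7,8] = [3,4,5]"
  "lkq A3 [1,4,7,9] = [11,16,18]"
  "lkq A3 [Suc 0,4,7,9] = [11,16,18]"
  "lkq A3 [1,4,8,9] = [10,14,19]"
  "lkq A3 [Suc 0,4,8,9] = [10,14,19]"
  by (simp_all add: lkq.simps A3_def A3_1_4_def)

lemma A3_vals_1_5:
  "lkq A3 [1,5,6,7] = [12,17,18]"
  "lkq A3 [Suc 0,5,6,7] = [12,17,18]"
  "lkq A3 [1,5,6,8] = [7,9,10]"
  "lkq A3 [Suc 0,5,6,8] = [7,9,10]"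
  "lkq A3 [1,5,6,9] = [6,11,19]"
  "lkq A3 [Suc 0,5,6,9] = [6,11,19]"
  "lkq A3 [1,5,7,8] = [14,15,19]"
  "lkq A3 [Suc 0,5,7,8] = [14,15,19]"
  "lkq A3 [1,5,7,9] = [5,9,20]"
  "lkq A3 [Suc 0,5,7,9] = [5,9,20]"
  "lkq A3 [1,5,8,9] = [4,8,18]"
  "lkq A3 [Suc 0,5,8,9] = [4,8,18]"
  by (simp_all add: lkq.simps A3_def A3_1_5_def)

lemma A3_vals_1_6:
  "lkq A3 [1,6,7,8] = [0,8,20]"
  "lkq A3 [Suc 0,6,7,8] = [0,8,20]"
  "lkq A3 [1,6,7,9] = [3,13,14]"
  "lkq A3 [Suc 0,6,7,9] = [3,13,14]"
  "lkq A3 [1,6,8,9] = [1,16,17]"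
  "lkq A3 [Suc 0,6,8,9] = [1,16,17]"
  by (simp_all add: lkq.simps A3_def A3_1_6_def)

lemma A3_vals_1_7:
  "lkq A3 [1,7,8,9] = [2,7,12]"
  "lkq A3 [Suc 0,7,8,9] = [2,7,12]"
  by (simp_all add: lkq.simps A3_def A3_1_7_def)

lemma A3_vals_2_3:
  "lkq A3 [2,3,4,5] = [0,7,16]"
  "lkq A3 [2,3,4,6] = [3,4,9]"
  "lkq A3 [2,3,4,7] = [8,17,19]"
  "lkq A3 [2,3,4,8] = [5,6,15]"
  "lkq A3 [2,3,4,9] = [1,2,20]"
  "lkq A3 [2,3,5,6] = [2,12,18]"
  "lkq A3 [2,3,5,7] = [1,13,20]"
  "lkq A3 [2,3,5,8] = [8,10,14]"
  "lkq A3 [2,3,5,9] = [4,6,19]"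
  "lkq A3 [2,3,6,7] = [0,10,14]"
  "lkq A3 [2,3,6,8] = [1,16,17]"
  "lkq A3 [2,3,6,9] = [5,11,13]"
  "lkq A3 [2,3,7,8] = [2,11,12]"
  "lkq A3 [2,3,7,9] = [7,9,15]"
  "lkq A3 [2,3,8,9] = [0,3,18]"
  by (simp_all add: lkq.simps A3_def A3_2_3_def)

lemma A3_vals_2_4:
  "lkq A3 [2,4,5,6] = [1,10,15]"
  "lkq A3 [2,4,5,7] = [4,6,12]"
  "lkq A3 [2,4,5,8] = [3,9,13]"
  "lkq A3 [2,4,5,9] = [5,8,11]"
  "lkq A3 [2,4,6,7] = [2,5,11]"
  "lkq A3 [2,4,6,8] = [0,7,20]"
  "lkq A3 [2,4,6,9] = [14,18,19]"
  "lkq A3 [2,4,7,8] = [14,16,18]"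
  "lkq A3 [2,4,7,9] = [3,10,13]"
  "lkq A3 [2,4,8,9] = [4,12,17]"
  by (simp_all add: lkq.simps A3_def A3_2_4_def)

lemma A3_vals_2_5:
  "lkq A3 [2,5,6,7] = [3,8,9]"
  "lkq A3 [2,5,6,8] = [6,11,19]"
  "lkq A3 [2,5,6,9] = [7,17,20]"
  "lkq A3 [2,5,7,8] = [5,7,17]"
  "lkq A3 [2,5,7,9] = [0,14,18]"
  "lkq A3 [2,5,8,9] = [2,15,16]"
  by (simp_all add: lkq.simps A3_def A3_2_5_def)

lemma A3_vals_2_6:
  "lkq A3 [2,6,7,8] = [4,13,15]"
  "lkq A3 [2,6,7,9] = [6,12,16]"
  "lkq A3 [2,6,8,9] = [8,9,10]"
  by (simp_all add: lkq.simps A3_def A3_2_6_def)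

lemma A3_vals_2_7:
  "lkq A3 [2,7,8,9] = [1,19,20]"
  by (simp_all add: lkq.simps A3_def A3_2_7_def)

lemma A3_vals_3_4:
  "lkq A3 [3,4,5,6] = [6,11,17]"
  "lkq A3 [3,4,5,7] = [3,9,15]"
  "lkq A3 [3,4,5,8] = [2,12,19]"
  "lkq A3 [3,4,5,9] = [10,14,18]"
  "lkq A3 [3,4,6,7] = [13,16,18]"
  "lkq A3 [3,4,6,8] = [8,10,14]"
  "lkq A3 [3,4,6,9] = [0,12,15]"
  "lkq A3 [3,4,7,8] = [1,7,20]"
  "lkq A3 [3,4,7,9] = [4,5,6]"
  "lkq A3 [3,4,8,9] = [11,13,16]"
  by (simp_all add: lkq.simps A3_def A3_3_4_def)

lemma A3_vals_3_5:
  "lkq A3 [3,5,6,7] = [5,7,19]"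
  "lkq A3 [3,5,6,8] = [13,15,20]"
  "lkq A3 [3,5,6,9] = [1,3,8]"
  "lkq A3 [3,5,7,8] = [0,4,18]"
  "lkq A3 [3,5,7,9] = [11,12,16]"
  "lkq A3 [3,5,8,9] = [5,9,17]"
  by (simp_all add: lkq.simps A3_def A3_3_5_def)

lemma A3_vals_3_6:
  "lkq A3 [3,6,7,8] = [3,6,9]"
  "lkq A3 [3,6,7,9] = [2,17,20]"
  "lkq A3 [3,6,8,9] = [4,7,19]"
  by (simp_all add: lkq.simps A3_def A3_3_6_def)

lemma A3_vals_3_7:
  "lkq A3 [3,7,8,9] = [8,10,14]"
  by (simp_all add: lkq.simps A3_def A3_3_7_def)

lemma A3_vals_4_5:
  "lkq A3 [4,5,6,7] = [0,14,20]"
  "lkq A3 [4,5,6,8] = [4,5,18]"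
  "lkq A3 [4,5,6,9] = [9,13,16]"
  "lkq A3 [4,5,7,8] = [8,10,11]"
  "lkq A3 [4,5,7,9] = [2,17,19]"
  "lkq A3 [4,5,8,9] = [1,7,20]"
  by (simp_all add: lkq.simps A3_def A3_4_5_def)

lemma A3_vals_4_6:
  "lkq A3 [4,6,7,8] = [12,17,19]"
  "lkq A3 [4,6,7,9] = [1,7,8]"
  "lkq A3 [4,6,8,9] = [2,3,6]"
  by (simp_all add: lkq.simps A3_def A3_4_6_def)

lemma A3_vals_4_7:
  "lkq A3 [4,7,8,9] = [0,9,15]"
  by (simp_all add: lkq.simps A3_def A3_4_7_def)

lemma A3_vals_5_6:
  "lkq A3 [5,6,7,8] = [1,2,16]"
  "lkq A3 [5,6,7,9] = [4,10,15]"
  "lkq A3 [5,6,8,9] = [0,12,14]"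
  by (simp_all add: lkq.simps A3_def A3_5_6_def)

lemma A3_vals_5_7:
  "lkq A3 [5,7,8,9] = [3,6,13]"
  by (simp_all add: lkq.simps A3_def A3_5_7_def)

lemma A3_vals_6_7:
  "lkq A3 [6,7,8,9] = [5,11,18]"
  by (simp_all add: lkq.simps A3_def A3_6_7_def)

lemmas A3_vals = A3_vals_0_1 A3_vals_0_2 A3_vals_0_3 A3_vals_0_4 A3_vals_0_5 A3_vals_0_6 A3_vals_0_7 A3_vals_1_2 A3_vals_1_3 A3_vals_1_4 A3_vals_1_5 A3_vals_1_6 A3_vals_1_7 A3_vals_2_3 A3_vals_2_4 A3_vals_2_5 A3_vals_2_6 A3_vals_2_7 A3_vals_3_4 A3_vals_3_5 A3_vals_3_6 A3_vals_3_7 A3_vals_4_5 A3_vals_4_6 A3_vals_4_7 A3_vals_5_6 A3_vals_5_7 A3_vals_6_7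

lemma A3_cov:
  "cov_ok (lkq A3 [0,1,2,3]) 3 21"
  "cov_ok (lkq A3 [0,1,2,4]) 3 21"
  "cov_ok (lkq A3 [0,1,2,5]) 3 21"
  "cov_ok (lkq A3 [0,1,2,6]) 3 21"
  "cov_ok (lkq A3 [0,1,2,7]) 3 21"
  "cov_ok (lkq A3 [0,1,2,8]) 3 21"
  "cov_ok (lkq A3 [0,1,2,9]) 3 21"
  "cov_ok (lkq A3 [0,1,3,4]) 3 21"
  "cov_ok (lkq A3 [0,1,3,5]) 3 21"
  "cov_ok (lkq A3 [0,1,3,6]) 3 21"
  "cov_ok (lkq A3 [0,1,3,7]) 3 21"
  "cov_ok (lkq A3 [0,1,3,8]) 3 21"
  "cov_ok (lkq A3 [0,1,3,9]) 3 21"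
  "cov_ok (lkq A3 [0,1,4,5]) 3 21"
  "cov_ok (lkq A3 [0,1,4,6]) 3 21"
  "cov_ok (lkq A3 [0,1,4,7]) 3 21"
  "cov_ok (lkq A3 [0,1,4,8]) 3 21"
  "cov_ok (lkq A3 [0,1,4,9]) 3 21"
  "cov_ok (lkq A3 [0,1,5,6]) 3 21"
  "cov_ok (lkq A3 [0,1,5,7]) 3 21"
  "cov_ok (lkq A3 [0,1,5,8]) 3 21"
  "cov_ok (lkq A3 [0,1,5,9]) 3 21"
  "cov_ok (lkq A3 [0,1,6,7]) 3 21"
  "cov_ok (lkq A3 [0,1,6,8]) 3 21"
  "cov_ok (lkq A3 [0,1,6,9]) 3 21"
  "cov_ok (lkq A3 [0,1,7,8]) 3 21"
  "cov_ok (lkq A3 [0,1,7,9]) 3 21"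
  "cov_ok (lkq A3 [0,1,8,9]) 3 21"
  "cov_ok (lkq A3 [0,2,3,4]) 3 21"
  "cov_ok (lkq A3 [0,2,3,5]) 3 21"
  "cov_ok (lkq A3 [0,2,3,6]) 3 21"
  "cov_ok (lkq A3 [0,2,3,7]) 3 21"
  "cov_ok (lkq A3 [0,2,3,8]) 3 21"
  "cov_ok (lkq A3 [0,2,3,9]) 3 21"
  "cov_ok (lkq A3 [0,2,4,5]) 3 21"
  "cov_ok (lkq A3 [0,2,4,6]) 3 21"
  "cov_ok (lkq A3 [0,2,4,7]) 3 21"
  "cov_ok (lkq A3 [0,2,4,8]) 3 21"
  "cov_ok (lkq A3 [0,2,4,9]) 3 21"
  "cov_ok (lkq A3 [0,2,5,6]) 3 21"
  "cov_ok (lkq A3 [0,2,5,7]) 3 21"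
  "cov_ok (lkq A3 [0,2,5,8]) 3 21"
  "cov_ok (lkq A3 [0,2,5,9]) 3 21"
  "cov_ok (lkq A3 [0,2,6,7]) 3 21"
  "cov_ok (lkq A3 [0,2,6,8]) 3 21"
  "cov_ok (lkq A3 [0,2,6,9]) 3 21"
  "cov_ok (lkq A3 [0,2,7,8]) 3 21"
  "cov_ok (lkq A3 [0,2,7,9]) 3 21"
  "cov_ok (lkq A3 [0,2,8,9]) 3 21"
  "cov_ok (lkq A3 [0,3,4,5]) 3 21"
  "cov_ok (lkq A3 [0,3,4,6]) 3 21"
  "cov_ok (lkq A3 [0,3,4,7]) 3 21"
  "cov_ok (lkq A3 [0,3,4,8]) 3 21"
  "cov_ok (lkq A3 [0,3,4,9]) 3 21"
  "cov_ok (lkq A3 [0,3,5,6]) 3 21"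
  "cov_ok (lkq A3 [0,3,5,7]) 3 21"
  "cov_ok (lkq A3 [0,3,5,8]) 3 21"
  "cov_ok (lkq A3 [0,3,5,9]) 3 21"
  "cov_ok (lkq A3 [0,3,6,7]) 3 21"
  "cov_ok (lkq A3 [0,3,6,8]) 3 21"
  "cov_ok (lkq A3 [0,3,6,9]) 3 21"
  "cov_ok (lkq A3 [0,3,7,8]) 3 21"
  "cov_ok (lkq A3 [0,3,7,9]) 3 21"
  "cov_ok (lkq A3 [0,3,8,9]) 3 21"
  "cov_ok (lkq A3 [0,4,5,6]) 3 21"
  "cov_ok (lkq A3 [0,4,5,7]) 3 21"
  "cov_ok (lkq A3 [0,4,5,8]) 3 21"
  "cov_ok (lkq A3 [0,4,5,9]) 3 21"
  "cov_ok (lkq A3 [0,4,6,7]) 3 21"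
  "cov_ok (lkq A3 [0,4,6,8]) 3 21"
  "cov_ok (lkq A3 [0,4,6,9]) 3 21"
  "cov_ok (lkq A3 [0,4,7,8]) 3 21"
  "cov_ok (lkq A3 [0,4,7,9]) 3 21"
  "cov_ok (lkq A3 [0,4,8,9]) 3 21"
  "cov_ok (lkq A3 [0,5,6,7]) 3 21"
  "cov_ok (lkq A3 [0,5,6,8]) 3 21"
  "cov_ok (lkq A3 [0,5,6,9]) 3 21"
  "cov_ok (lkq A3 [0,5,7,8]) 3 21"
  "cov_ok (lkq A3 [0,5,7,9]) 3 21"
  "cov_ok (lkq A3 [0,5,8,9]) 3 21"
  "cov_ok (lkq A3 [0,6,7,8]) 3 21"
  "cov_ok (lkq A3 [0,6,7,9]) 3 21"
  "cov_ok (lkq A3 [0,6,8,9]) 3 21"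
  "cov_ok (lkq A3 [0,7,8,9]) 3 21"
  "cov_ok (lkq A3 [1,2,3,4]) 3 21"
  "cov_ok (lkq A3 [1,2,3,5]) 3 21"
  "cov_ok (lkq A3 [1,2,3,6]) 3 21"
  "cov_ok (lkq A3 [1,2,3,7]) 3 21"
  "cov_ok (lkq A3 [1,2,3,8]) 3 21"
  "cov_ok (lkq A3 [1,2,3,9]) 3 21"
  "cov_ok (lkq A3 [1,2,4,5]) 3 21"
  "cov_ok (lkq A3 [1,2,4,6]) 3 21"
  "cov_ok (lkq A3 [1,2,4,7]) 3 21"
  "cov_ok (lkq A3 [1,2,4,8]) 3 21"
  "cov_ok (lkq A3 [1,2,4,9]) 3 21"
  "cov_ok (lkq A3 [1,2,5,6]) 3 21"
  "cov_ok (lkq A3 [1,2,5,7]) 3 21"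
  "cov_ok (lkq A3 [1,2,5,8]) 3 21"
  "cov_ok (lkq A3 [1,2,5,9]) 3 21"
  "cov_ok (lkq A3 [1,2,6,7]) 3 21"
  "cov_ok (lkq A3 [1,2,6,8]) 3 21"
  "cov_ok (lkq A3 [1,2,6,9]) 3 21"
  "cov_ok (lkq A3 [1,2,7,8]) 3 21"
  "cov_ok (lkq A3 [1,2,7,9]) 3 21"
  "cov_ok (lkq A3 [1,2,8,9]) 3 21"
  "cov_ok (lkq A3 [1,3,4,5]) 3 21"
  "cov_ok (lkq A3 [1,3,4,6]) 3 21"
  "cov_ok (lkq A3 [1,3,4,7]) 3 21"
  "cov_ok (lkq A3 [1,3,4,8]) 3 21"
  "cov_ok (lkq A3 [1,3,4,9]) 3 21"
  "cov_ok (lkq A3 [1,3,5,6]) 3 21"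
  "cov_ok (lkq A3 [1,3,5,7]) 3 21"
  "cov_ok (lkq A3 [1,3,5,8]) 3 21"
  "cov_ok (lkq A3 [1,3,5,9]) 3 21"
  "cov_ok (lkq A3 [1,3,6,7]) 3 21"
  "cov_ok (lkq A3 [1,3,6,8]) 3 21"
  "cov_ok (lkq A3 [1,3,6,9]) 3 21"
  "cov_ok (lkq A3 [1,3,7,8]) 3 21"
  "cov_ok (lkq A3 [1,3,7,9]) 3 21"
  "cov_ok (lkq A3 [1,3,8,9]) 3 21"
  "cov_ok (lkq A3 [1,4,5,6]) 3 21"
  "cov_ok (lkq A3 [1,4,5,7]) 3 21"
  "cov_ok (lkq A3 [1,4,5,8]) 3 21"
  "cov_ok (lkq A3 [1,4,5,9]) 3 21"
  "cov_ok (lkq A3 [1,4,6,7]) 3 21"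
  "cov_ok (lkq A3 [1,4,6,8]) 3 21"
  "cov_ok (lkq A3 [1,4,6,9]) 3 21"
  "cov_ok (lkq A3 [1,4,7,8]) 3 21"
  "cov_ok (lkq A3 [1,4,7,9]) 3 21"
  "cov_ok (lkq A3 [1,4,8,9]) 3 21"
  "cov_ok (lkq A3 [1,5,6,7]) 3 21"
  "cov_ok (lkq A3 [1,5,6,8]) 3 21"
  "cov_ok (lkq A3 [1,5,6,9]) 3 21"
  "cov_ok (lkq A3 [1,5,7,8]) 3 21"
  "cov_ok (lkq A3 [1,5,7,9]) 3 21"
  "cov_ok (lkq A3 [1,5,8,9]) 3 21"
  "cov_ok (lkq A3 [1,6,7,8]) 3 21"
  "cov_ok (lkq A3 [1,6,7,9]) 3 21"
  "cov_ok (lkq A3 [1,6,8,9]) 3 21"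
  "cov_ok (lkq A3 [1,7,8,9]) 3 21"
  "cov_ok (lkq A3 [2,3,4,5]) 3 21"
  "cov_ok (lkq A3 [2,3,4,6]) 3 21"
  "cov_ok (lkq A3 [2,3,4,7]) 3 21"
  "cov_ok (lkq A3 [2,3,4,8]) 3 21"
  "cov_ok (lkq A3 [2,3,4,9]) 3 21"
  "cov_ok (lkq A3 [2,3,5,6]) 3 21"
  "cov_ok (lkq A3 [2,3,5,7]) 3 21"
  "cov_ok (lkq A3 [2,3,5,8]) 3 21"
  "cov_ok (lkq A3 [2,3,5,9]) 3 21"
  "cov_ok (lkq A3 [2,3,6,7]) 3 21"
  "cov_ok (lkq A3 [2,3,6,8]) 3 21"
  "cov_ok (lkq A3 [2,3,6,9]) 3 21"
  "cov_ok (lkq A3 [2,3,7,8]) 3 21"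
  "cov_ok (lkq A3 [2,3,7,9]) 3 21"
  "cov_ok (lkq A3 [2,3,8,9]) 3 21"
  "cov_ok (lkq A3 [2,4,5,6]) 3 21"
  "cov_ok (lkq A3 [2,4,5,7]) 3 21"
  "cov_ok (lkq A3 [2,4,5,8]) 3 21"
  "cov_ok (lkq A3 [2,4,5,9]) 3 21"
  "cov_ok (lkq A3 [2,4,6,7]) 3 21"
  "cov_ok (lkq A3 [2,4,6,8]) 3 21"
  "cov_ok (lkq A3 [2,4,6,9]) 3 21"
  "cov_ok (lkq A3 [2,4,7,8]) 3 21"
  "cov_ok (lkq A3 [2,4,7,9]) 3 21"
  "cov_ok (lkq A3 [2,4,8,9]) 3 21"
  "cov_ok (lkq A3 [2,5,6,7]) 3 21"
  "cov_ok (lkq A3 [2,5,6,8]) 3 21"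
  "cov_ok (lkq A3 [2,5,6,9]) 3 21"
  "cov_ok (lkq A3 [2,5,7,8]) 3 21"
  "cov_ok (lkq A3 [2,5,7,9]) 3 21"
  "cov_ok (lkq A3 [2,5,8,9]) 3 21"
  "cov_ok (lkq A3 [2,6,7,8]) 3 21"
  "cov_ok (lkq A3 [2,6,7,9]) 3 21"
  "cov_ok (lkq A3 [2,6,8,9]) 3 21"
  "cov_ok (lkq A3 [2,7,8,9]) 3 21"
  "cov_ok (lkq A3 [3,4,5,6]) 3 21"
  "cov_ok (lkq A3 [3,4,5,7]) 3 21"
  "cov_ok (lkq A3 [3,4,5,8]) 3 21"
  "cov_ok (lkq A3 [3,4,5,9]) 3 21"
  "cov_ok (lkq A3 [3,4,6,7]) 3 21"
  "cov_ok (lkq A3 [3,4,6,8]) 3 21"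
  "cov_ok (lkq A3 [3,4,6,9]) 3 21"
  "cov_ok (lkq A3 [3,4,7,8]) 3 21"
  "cov_ok (lkq A3 [3,4,7,9]) 3 21"
  "cov_ok (lkq A3 [3,4,8,9]) 3 21"
  "cov_ok (lkq A3 [3,5,6,7]) 3 21"
  "cov_ok (lkq A3 [3,5,6,8]) 3 21"
  "cov_ok (lkq A3 [3,5,6,9]) 3 21"
  "cov_ok (lkq A3 [3,5,7,8]) 3 21"
  "cov_ok (lkq A3 [3,5,7,9]) 3 21"
  "cov_ok (lkq A3 [3,5,8,9]) 3 21"
  "cov_ok (lkq A3 [3,6,7,8]) 3 21"
  "cov_ok (lkq A3 [3,6,7,9]) 3 21"
  "cov_ok (lkq A3 [3,6,8,9]) 3 21"
  "cov_ok (lkq A3 [3,7,8,9]) 3 21"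
  "cov_ok (lkq A3 [4,5,6,7]) 3 21"
  "cov_ok (lkq A3 [4,5,6,8]) 3 21"
  "cov_ok (lkq A3 [4,5,6,9]) 3 21"
  "cov_ok (lkq A3 [4,5,7,8]) 3 21"
  "cov_ok (lkq A3 [4,5,7,9]) 3 21"
  "cov_ok (lkq A3 [4,5,8,9]) 3 21"
  "cov_ok (lkq A3 [4,6,7,8]) 3 21"
  "cov_ok (lkq A3 [4,6,7,9]) 3 21"
  "cov_ok (lkq A3 [4,6,8,9]) 3 21"
  "cov_ok (lkq A3 [4,7,8,9]) 3 21"
  "cov_ok (lkq A3 [5,6,7,8]) 3 21"
  "cov_ok (lkq A3 [5,6,7,9]) 3 21"
  "cov_ok (lkq A3 [5,6,8,9]) 3 21"
  "cov_ok (lkq A3 [5,7,8,9]) 3 21"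
  "cov_ok (lkq A3 [6,7,8,9]) 3 21"
  by (simp_all add: A3_vals cov_ok_def)

lemma A3_sqs:
  "sqs_ok (lkq A3) [0,1,2] 21"
  "sqs_ok (lkq A3) [0,1,3] 21"
  "sqs_ok (lkq A3) [0,1,4] 21"
  "sqs_ok (lkq A3) [0,1,5] 21"
  "sqs_ok (lkq A3) [0,1,6] 21"
  "sqs_ok (lkq A3) [0,1,7] 21"
  "sqs_ok (lkq A3) [0,1,8] 21"
  "sqs_ok (lkq A3) [0,1,9] 21"
  "sqs_ok (lkq A3) [0,2,3] 21"
  "sqs_ok (lkq A3) [0,2,4] 21"
  "sqs_ok (lkq A3) [0,2,5] 21"
  "sqs_ok (lkq A3) [0,2,6] 21"
  "sqs_ok (lkq A3) [0,2,7] 21"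
  "sqs_ok (lkq A3) [0,2,8] 21"
  "sqs_ok (lkq A3) [0,2,9] 21"
  "sqs_ok (lkq A3) [0,3,4] 21"
  "sqs_ok (lkq A3) [0,3,5] 21"
  "sqs_ok (lkq A3) [0,3,6] 21"
  "sqs_ok (lkq A3) [0,3,7] 21"
  "sqs_ok (lkq A3) [0,3,8] 21"
  "sqs_ok (lkq A3) [0,3,9] 21"
  "sqs_ok (lkq A3) [0,4,5] 21"
  "sqs_ok (lkq A3) [0,4,6] 21"
  "sqs_ok (lkq A3) [0,4,7] 21"
  "sqs_ok (lkq A3) [0,4,8] 21"
  "sqs_ok (lkq A3) [0,4,9] 21"
  "sqs_ok (lkq A3) [0,5,6] 21"
  "sqs_ok (lkq A3) [0,5,7] 21"
  "sqs_ok (lkq A3) [0,5,8] 21"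
  "sqs_ok (lkq A3) [0,5,9] 21"
  "sqs_ok (lkq A3) [0,6,7] 21"
  "sqs_ok (lkq A3) [0,6,8] 21"
  "sqs_ok (lkq A3) [0,6,9] 21"
  "sqs_ok (lkq A3) [0,7,8] 21"
  "sqs_ok (lkq A3) [0,7,9] 21"
  "sqs_ok (lkq A3) [0,8,9] 21"
  "sqs_ok (lkq A3) [1,2,3] 21"
  "sqs_ok (lkq A3) [1,2,4] 21"
  "sqs_ok (lkq A3) [1,2,5] 21"
  "sqs_ok (lkq A3) [1,2,6] 21"
  "sqs_ok (lkq A3) [1,2,7] 21"
  "sqs_ok (lkq A3) [1,2,8] 21"
  "sqs_ok (lkq A3) [1,2,9] 21"
  "sqs_ok (lkq A3) [1,3,4] 21"
  "sqs_ok (lkq A3) [1,3,5] 21"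
  "sqs_ok (lkq A3) [1,3,6] 21"
  "sqs_ok (lkq A3) [1,3,7] 21"
  "sqs_ok (lkq A3) [1,3,8] 21"
  "sqs_ok (lkq A3) [1,3,9] 21"
  "sqs_ok (lkq A3) [1,4,5] 21"
  "sqs_ok (lkq A3) [1,4,6] 21"
  "sqs_ok (lkq A3) [1,4,7] 21"
  "sqs_ok (lkq A3) [1,4,8] 21"
  "sqs_ok (lkq A3) [1,4,9] 21"
  "sqs_ok (lkq A3) [1,5,6] 21"
  "sqs_ok (lkq A3) [1,5,7] 21"
  "sqs_ok (lkq A3) [1,5,8] 21"
  "sqs_ok (lkq A3) [1,5,9] 21"
  "sqs_ok (lkq A3) [1,6,7] 21"
  "sqs_ok (lkq A3) [1,6,8] 21"
  "sqs_ok (lkq A3) [1,6,9] 21"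
  "sqs_ok (lkq A3) [1,7,8] 21"
  "sqs_ok (lkq A3) [1,7,9] 21"
  "sqs_ok (lkq A3) [1,8,9] 21"
  "sqs_ok (lkq A3) [2,3,4] 21"
  "sqs_ok (lkq A3) [2,3,5] 21"
  "sqs_ok (lkq A3) [2,3,6] 21"
  "sqs_ok (lkq A3) [2,3,7] 21"
  "sqs_ok (lkq A3) [2,3,8] 21"
  "sqs_ok (lkq A3) [2,3,9] 21"
  "sqs_ok (lkq A3) [2,4,5] 21"
  "sqs_ok (lkq A3) [2,4,6] 21"
  "sqs_ok (lkq A3) [2,4,7] 21"
  "sqs_ok (lkq A3) [2,4,8] 21"
  "sqs_ok (lkq A3) [2,4,9] 21"
  "sqs_ok (lkq A3) [2,5,6] 21"
  "sqs_ok (lkq A3) [2,5,7] 21"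
  "sqs_ok (lkq A3) [2,5,8] 21"
  "sqs_ok (lkq A3) [2,5,9] 21"
  "sqs_ok (lkq A3) [2,6,7] 21"
  "sqs_ok (lkq A3) [2,6,8] 21"
  "sqs_ok (lkq A3) [2,6,9] 21"
  "sqs_ok (lkq A3) [2,7,8] 21"
  "sqs_ok (lkq A3) [2,7,9] 21"
  "sqs_ok (lkq A3) [2,8,9] 21"
  "sqs_ok (lkq A3) [3,4,5] 21"
  "sqs_ok (lkq A3) [3,4,6] 21"
  "sqs_ok (lkq A3) [3,4,7] 21"
  "sqs_ok (lkq A3) [3,4,8] 21"
  "sqs_ok (lkq A3) [3,4,9] 21"
  "sqs_ok (lkq A3) [3,5,6] 21"
  "sqs_ok (lkq A3) [3,5,7] 21"
  "sqs_ok (lkq A3) [3,5,8] 21"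
  "sqs_ok (lkq A3) [3,5,9] 21"
  "sqs_ok (lkq A3) [3,6,7] 21"
  "sqs_ok (lkq A3) [3,6,8] 21"
  "sqs_ok (lkq A3) [3,6,9] 21"
  "sqs_ok (lkq A3) [3,7,8] 21"
  "sqs_ok (lkq A3) [3,7,9] 21"
  "sqs_ok (lkq A3) [3,8,9] 21"
  "sqs_ok (lkq A3) [4,5,6] 21"
  "sqs_ok (lkq A3) [4,5,7] 21"
  "sqs_ok (lkq A3) [4,5,8] 21"
  "sqs_ok (lkq A3) [4,5,9] 21"
  "sqs_ok (lkq A3) [4,6,7] 21"
  "sqs_ok (lkq A3) [4,6,8] 21"
  "sqs_ok (lkq A3) [4,6,9] 21"
  "sqs_ok (lkq A3) [4,7,8] 21"
  "sqs_ok (lkq A3) [4,7,9] 21"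
  "sqs_ok (lkq A3) [4,8,9] 21"
  "sqs_ok (lkq A3) [5,6,7] 21"
  "sqs_ok (lkq A3) [5,6,8] 21"
  "sqs_ok (lkq A3) [5,6,9] 21"
  "sqs_ok (lkq A3) [5,7,8] 21"
  "sqs_ok (lkq A3) [5,7,9] 21"
  "sqs_ok (lkq A3) [5,8,9] 21"
  "sqs_ok (lkq A3) [6,7,8] 21"
  "sqs_ok (lkq A3) [6,7,9] 21"
  "sqs_ok (lkq A3) [6,8,9] 21"
  "sqs_ok (lkq A3) [7,8,9] 21"
  by (simp_all add: A3_vals sqs_ok_def upt10 upt14 upt21)

lemma chk_cov2: "chk_cov A2 2 14" unfolding chk_cov_def quadsL_eq by (simp only: list.set ball_simps A2_cov simp_thms)
lemma chk_sqs2: "chk_sqs A2 14" unfolding chk_sqs_def triplesL_eq by (simp only: list.set ball_simps A2_sqs simp_thms)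
lemma chk_cov3: "chk_cov A3 3 21" unfolding chk_cov_def quadsL_eq by (simp only: list.set ball_simps A3_cov simp_thms)
lemma chk_sqs3: "chk_sqs A3 21" unfolding chk_sqs_def triplesL_eq by (simp only: list.set ball_simps A3_sqs simp_thms)

lemma len4_cases: "length l = 4 \<Longrightarrow> \<exists>a b c d. l = [a,b,c,d]"
  by (cases l rule: list.exhaust; simp; rename_tac x xs; case_tac xs rule: list.exhaust; simp;
      rename_tac y ys; case_tac ys rule: list.exhaust; simp; rename_tac z zs; case_tac zs rule: list.exhaust; simp)
lemma len3_cases: "length l = 3 \<Longrightarrow> \<exists>a b c. l = [a,b,c]"
  by (cases l rule: list.exhaust; simp; rename_tac x xs; case_tac xs rule: list.exhaust; simp;
      rename_tac y ys; case_tac ys rule: list.exhaust; simp)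

lemma quad_in:
  assumes "Q \<subseteq> {..<10::nat}" "card Q = 4"
  shows "sorted_list_of_set Q \<in> set quadsL"
proof -
  have fin: "finite Q" using assms(1) finite_subset by auto
  define l where "l = sorted_list_of_set Q"
  have "length l = 4" using assms l_def by simp
  then obtain a b c d where l: "l = [a,b,c,d]" using len4_cases by blast
  have "sorted_wrt (<) l" unfolding l_def by (rule strict_sorted_list_of_set)
  moreover have "set l \<subseteq> {..<10}" using assms fin l_def by simp
  ultimately have "a < b" "b < c" "c < d" "d < 10" using l by auto
  hence "[a,b,c,d] \<in> set quadsL" unfolding quadsL_def
    apply simp apply (rule bexI[of _ a], rule bexI[of _ b], rule bexI[of _ c]) by auto
  thus ?thesis unfolding l_def[symmetric] l .
qed

lemma triple_in:
  assumes "t \<subseteq> {..<10::nat}" "card t = 3"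
  shows "sorted_list_of_set t \<in> set triplesL"
proof -
  have fin: "finite t" using assms(1) finite_subset by auto
  define l where "l = sorted_list_of_set t"
  have "length l = 3" using assms l_def by simp
  then obtain a b c where l: "l = [a,b,c]" using len3_cases by blast
  have "sorted_wrt (<) l" unfolding l_def by (rule strict_sorted_list_of_set)
  moreover have "set l \<subseteq> {..<10}" using assms fin l_def by simp
  ultimately have "a < b" "b < c" "c < 10" using l by auto
  hence "[a,b,c] \<in> set triplesL" unfolding triplesL_def
    apply simp apply (rule bexI[of _ a], rule bexI[of _ b]) by auto
  thus ?thesis unfolding l_def[symmetric] l .
qed

lemma distinct_concat_map_disj:
  "distinct (concat (map F ds)) \<Longrightarrow> x \<in> set ds \<Longrightarrow> y \<in> set ds \<Longrightarrow> x \<noteq> y \<Longrightarrow> set (F x) \<inter> set (F y) = {}"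
proof (induction ds)
  case Nil thus ?case by simp
next
  case (Cons a ds)
  thus ?case by (auto simp: Int_commute)
qed

lemma unique_from_sort:
  assumes "sort (concat (map F ds)) = [0..<n]" "j < n"
  shows "\<exists>!d. d \<in> set ds \<and> j \<in> set (F d)"
proof -
  have s: "set (concat (map F ds)) = {0..<n}" using arg_cong[OF assms(1), of set] by simp
  have di: "distinct (concat (map F ds))" using arg_cong[OF assms(1), of distinct] by simp
  have "j \<in> set (concat (map F ds))" using s assms(2) by simp
  then obtain d where "d \<in> set ds" "j \<in> set (F d)" by auto
  moreover have "\<And>d'. d' \<in> set ds \<Longrightarrow> j \<in> set (F d') \<Longrightarrow> d' = d"
    using distinct_concat_map_disj[OF di] calculation by blast
  ultimately show ?thesis by blast
qed

definition JJ :: "(nat list \<times> nat list) list list list \<Rightarrow> nat set \<Rightarrow> nat set" where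
  "JJ tb Q = set (lkq tb (sorted_list_of_set Q))"

lemma JJ_P1:
  assumes "chk_cov tb lam n" "Q \<subseteq> {..<10}" "card Q = 4"
  shows "JJ tb Q \<subseteq> {..<n} \<and> card (JJ tb Q) = lam"
proof -
  have "sorted_list_of_set Q \<in> set quadsL" using quad_in assms(2,3) by blast
  thus ?thesis using assms(1) unfolding chk_cov_def cov_ok_def JJ_def by (auto simp: distinct_card)
qed

lemma JJ_P2:
  assumes "chk_sqs tb n" "j < n" "t \<subseteq> {..<10}" "card t = 3"
  shows "\<exists>!d. d < 10 \<and> d \<notin> t \<and> j \<in> JJ tb (insert d t)"
proof -
  define l where "l = sorted_list_of_set t"
  have fin: "finite t" using assms(3) finite_subset by auto
  have lt: "l \<in> set triplesL" using triple_in assms(3,4) l_def by blast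
  have sl: "set l = t" using fin l_def by simp
  define F where "F = (\<lambda>d. lkq tb (insort d l))"
  have "sort (concat (map F (filter (\<lambda>d. d \<notin> set l) [0..<10]))) = [0..<n]"
    using assms(1) lt unfolding chk_sqs_def sqs_ok_def F_def by blast
  from unique_from_sort[OF this assms(2)]
  have u: "\<exists>!d. d \<in> set (filter (\<lambda>d. d \<notin> set l) [0..<10]) \<and> j \<in> set (F d)" .
  have eq: "(d \<in> set (filter (\<lambda>d. d \<notin> set l) [0..<10]) \<and> j \<in> set (F d)) \<longleftrightarrow>
            (d < 10 \<and> d \<notin> t \<and> j \<in> JJ tb (insert d t))" for d
  proof (cases "d \<in> t")
    case True thus ?thesis using sl by auto
  next
    case False
    hence "sorted_list_of_set (insert d t) = insort d l" using fin l_def by (simp add: sorted_list_of_set_insert)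
    thus ?thesis using False sl unfolding F_def JJ_def by auto
  qed
  show ?thesis using u unfolding eq .
qed



lemma card_periodic:
  fixes n m :: nat and A :: "nat set"
  assumes n: "n > 0" and A: "A \<subseteq> {..<n}"
  shows "card {i. i < n*m \<and> i mod n \<in> A} = m * card A"
proof -
  define h where "h = (\<lambda>(q, r). q*n + r)"
  have inj: "inj_on h ({..<m} \<times> A)"
  proof (rule inj_onI)
    fix x y assume x: "x \<in> {..<m} \<times> A" and y: "y \<in> {..<m} \<times> A" and e: "h x = h y"
    obtain q r where xq: "x = (q, r)" by (cases x)
    obtain q' r' where yq: "y = (q', r')" by (cases y)
    have "r < n" "r' < n" using x y xq yq A by auto
    moreover have "q*n + r = q'*n + r'" using e xq yq h_def by simp
    ultimately have "q = q'" "r = r'"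
      by (metis add.commute add_right_cancel div_mult_self1 less_nat_zero_code mod_less mod_mult_self1 n not_gr0 div_less)+
    thus "x = y" using xq yq by simp
  qed
  have img: "h ` ({..<m} \<times> A) = {i. i < n*m \<and> i mod n \<in> A}"
  proof (intro equalityI subsetI)
    fix i assume "i \<in> h ` ({..<m} \<times> A)"
    then obtain q r where qr: "q < m" "r \<in> A" "i = q*n + r" unfolding h_def by auto
    have rn: "r < n" using qr A by auto
    have "i < q*n + n" using qr rn by simp
    also have "q*n + n = (q+1)*n" by simp
    also have "\<dots> \<le> m*n" using qr by (intro mult_right_mono) auto
    finally have "i < n*m" by (simp add: mult.commute)
    moreover have "i mod n = r" using qr rn by simp
    ultimately show "i \<in> {i. i < n*m \<and> i mod n \<in> A}" using qr by simp
  next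
    fix i assume i: "i \<in> {i. i < n*m \<and> i mod n \<in> A}"
    have "i div n < m" using i n by (simp add: div_less_iff_less_mult mult.commute)
    moreover have "i = h (i div n, i mod n)" unfolding h_def by simp
    ultimately show "i \<in> h ` ({..<m} \<times> A)" using i by blast
  qed
  have "card {i. i < n*m \<and> i mod n \<in> A} = card ({..<m} \<times> A)"
    using card_image[OF inj] img by simp
  also have "\<dots> = m * card A" by (simp add: card_cartesian_product)
  finally show ?thesis .
qed

definition Eset :: "nat \<Rightarrow> nat set \<Rightarrow> nat set" where
  "Eset m Q = {i. i < 14*m \<and> i mod 14 \<in> JJ A2 Q}"

definition Jg :: "nat \<Rightarrow> nat set \<Rightarrow> nat set" where
  "Jg g Q = (if even g then Eset (g div 2) Q else JJ A3 Q \<union> (+) 21 ` Eset ((g-3) div 2) Q)"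

lemma Eset_P1:
  assumes "Q \<subseteq> {..<10}" "card Q = 4"
  shows "Eset m Q \<subseteq> {..<14*m} \<and> card (Eset m Q) = 2*m"
proof -
  have J: "JJ A2 Q \<subseteq> {..<14} \<and> card (JJ A2 Q) = 2" using JJ_P1[OF chk_cov2 assms] .
  have "card (Eset m Q) = m * 2" unfolding Eset_def using card_periodic[of 14 "JJ A2 Q" m] J by simp
  thus ?thesis unfolding Eset_def by auto
qed

lemma Jg_B1:
  assumes g: "g \<ge> 2" and Q: "Q \<subseteq> {..<10}" "card Q = 4"
  shows "Jg g Q \<subseteq> {..<7*g} \<and> card (Jg g Q) = g"
proof (cases "even g")
  case True
  then obtain m where m: "g = 2*m" by blast
  thus ?thesis using True Eset_P1[OF Q, of m] unfolding Jg_def by auto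
next
  case False
  then obtain k where k: "g = 2*k + 1" by (metis oddE)
    have "k \<noteq> 0" using k g by auto
    then obtain m0 where "k = Suc m0" by (cases k) auto
    then obtain m where m: "g = 2*m + 3" using k by simp
  have md: "(g - 3) div 2 = m" using m by simp
  have J3: "JJ A3 Q \<subseteq> {..<21} \<and> card (JJ A3 Q) = 3" using JJ_P1[OF chk_cov3 Q] .
  have E: "Eset m Q \<subseteq> {..<14*m} \<and> card (Eset m Q) = 2*m" using Eset_P1[OF Q] .
  have sub2: "(+) 21 ` Eset m Q \<subseteq> {21..<7*g}" using E m by auto
  have c2: "card ((+) 21 ` Eset m Q) = 2*m" using E by (simp add: card_image)
  have disj: "JJ A3 Q \<inter> (+) 21 ` Eset m Q = {}" using J3 sub2 by auto
  have fin1: "finite (JJ A3 Q)" using J3 finite_subset by blast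
  have fin2: "finite ((+) 21 ` Eset m Q)" using sub2 finite_subset by blast
  have "card (JJ A3 Q \<union> (+) 21 ` Eset m Q) = 3 + 2*m" using card_Un_disjoint[OF fin1 fin2 disj] J3 c2 by simp
  moreover have "JJ A3 Q \<union> (+) 21 ` Eset m Q \<subseteq> {..<7*g}" using J3 sub2 m by auto
  ultimately show ?thesis using False md m unfolding Jg_def by simp
qed

lemma Jg_B2:
  assumes g: "g \<ge> 2" and i: "i < 7*g" and t: "t \<subseteq> {..<10}" "card t = 3"
  shows "\<exists>!d. d < 10 \<and> d \<notin> t \<and> i \<in> Jg g (insert d t)"
proof -
  have fint: "finite t" using t finite_subset by blast
  have Q4: "insert d t \<subseteq> {..<10} \<and> card (insert d t) = 4" if "d < 10" "d \<notin> t" for d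
    using that t fint by auto
  have key: "\<exists>tb n j. chk_sqs tb n \<and> j < n \<and>
     (\<forall>d. d < 10 \<and> d \<notin> t \<longrightarrow> (i \<in> Jg g (insert d t) \<longleftrightarrow> j \<in> JJ tb (insert d t)))"
  proof (cases "even g")
    case True
    then obtain m where m: "g = 2*m" by blast
    have "i \<in> Jg g Q \<longleftrightarrow> i mod 14 \<in> JJ A2 Q" for Q
      using True m i unfolding Jg_def Eset_def by auto
    thus ?thesis using chk_sqs2 by (intro exI[of _ A2] exI[of _ 14] exI[of _ "i mod 14"]) auto
  next
    case False
    then obtain k where k: "g = 2*k + 1" by (metis oddE)
    have "k \<noteq> 0" using k g by auto
    then obtain m0 where "k = Suc m0" by (cases k) auto
    then obtain m where m: "g = 2*m + 3" using k by simp
    have md: "(g - 3) div 2 = m" using m by simp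
    show ?thesis
    proof (cases "i < 21")
      case True
      have "i \<in> Jg g Q \<longleftrightarrow> i \<in> JJ A3 Q" for Q
        using True False unfolding Jg_def by auto
      thus ?thesis using chk_sqs3 True by (intro exI[of _ A3] exI[of _ 21] exI[of _ i]) auto
    next
      case ge: False
      have "i \<in> Jg g (insert d t) \<longleftrightarrow> (i - 21) mod 14 \<in> JJ A2 (insert d t)" if d: "d < 10" "d \<notin> t" for d
      proof -
        have "JJ A3 (insert d t) \<subseteq> {..<21}" using JJ_P1[OF chk_cov3] Q4[OF d] by blast
        hence "i \<notin> JJ A3 (insert d t)" using ge by auto
        moreover have "i \<in> (+) 21 ` Eset m (insert d t) \<longleftrightarrow> (i - 21) mod 14 \<in> JJ A2 (insert d t)"
        proof
          assume "i \<in> (+) 21 ` Eset m (insert d t)"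
          thus "(i - 21) mod 14 \<in> JJ A2 (insert d t)" unfolding Eset_def by auto
        next
          assume a: "(i - 21) mod 14 \<in> JJ A2 (insert d t)"
          have "i - 21 < 14*m" using i ge m by simp
          hence "i - 21 \<in> Eset m (insert d t)" using a unfolding Eset_def by simp
          moreover have "i = 21 + (i - 21)" using ge by simp
          ultimately show "i \<in> (+) 21 ` Eset m (insert d t)" by blast
        qed
        ultimately show ?thesis using False md unfolding Jg_def by auto
      qed
      thus ?thesis using chk_sqs2 by (intro exI[of _ A2] exI[of _ 14] exI[of _ "(i - 21) mod 14"]) auto
    qed
  qed
  then obtain tb n j where c: "chk_sqs tb n" "j < n"
    and eq: "\<And>d. d < 10 \<Longrightarrow> d \<notin> t \<Longrightarrow> (i \<in> Jg g (insert d t) \<longleftrightarrow> j \<in> JJ tb (insert d t))" by blast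
  have "\<exists>!d. d < 10 \<and> d \<notin> t \<and> j \<in> JJ tb (insert d t)" using JJ_P2[OF c t] .
  moreover have "(d < 10 \<and> d \<notin> t \<and> i \<in> Jg g (insert d t)) \<longleftrightarrow> (d < 10 \<and> d \<notin> t \<and> j \<in> JJ tb (insert d t))" for d
    using eq by blast
  ultimately show ?thesis by simp
qed

theorem theorem17:
  fixes g :: nat
  assumes "g \<ge> 2"
  shows "\<exists>(Q :: nat set) G \<B>. large_set_H 10 g 4 3 Q G \<B>"
proof (rule main_construction[where N = "7*g" and J = "Jg g"])
  show "g > 0" using assms by simp
  show "\<And>Q. Q \<subseteq> {..<10} \<Longrightarrow> card Q = 4 \<Longrightarrow> Jg g Q \<subseteq> {..<7*g} \<and> card (Jg g Q) = g"
    using Jg_B1[OF assms] by blast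
  show "\<And>i t. i < 7*g \<Longrightarrow> t \<subseteq> {..<10} \<Longrightarrow> card t = 3 \<Longrightarrow> \<exists>!d. d < 10 \<and> d \<notin> t \<and> i \<in> Jg g (insert d t)"
    using Jg_B2[OF assms] by blast
qed

end
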